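(* Let $k$, $d$ and $n$ be positive integers such that $k \ge 6$ is even, $d \ge 2$, and $n = \frac{d+1}{8}(k^2-2sk+4s-4)$, where $s \in \{0,1\}$ with $s \equiv \frac{k-2}{2} \pmod 2$. Then a function $f:[n] \rightarrow \{-1,1\}$ satisfies $|f([n])| = \frac{d-1}{d+1}n$ and has no $(d,k)$-block $A\subseteq[n]$ with $f(A)=0$ if and only if $f \in \mathcal{F}_{d,k}$.
   Context: $[n]=\{1,\dots,n\}$; $f(Y)=\sum_{y\in Y}f(y)$. A block is a set of consecutive integers. A $(d,k)$-block in $[n]$ is a set $\{a_1<\dots<a_k\}\subseteq[n]$ with $a_{i+1}-a_i\le d$ for all $i$. With $k,d,s,n$ as in the claim, put $m=\frac{k-2s-2}{4}$, $b=(d+1)\frac{k}{2}+d-1$, $r=\frac{k}{2}-1+ds$ (so $n=mb+r$), and define $R_i=\{(i-1)b+1,\dots,(i-1)b+r\}$ for $1\le i\le m+1$ and $T_i=\{(i-1)b+\frac{k}{2}+ds,\dots,ib\}$ for $1\le i\le m$. The family $\mathcal{F}^+_{d,k}$ consists of the $f:[n]\to\{-1,1\}$ such that: (F1) if $s=0$: $f(x)=-1$ for $x\in R_i$ ($1\le i\le m+1$) and $f(x)=1$ for $x\in T_i$ ($1\le i\le m$); (F2) if $s=1$: (i) $f(T_i)=|T_i|=\frac{k}{2}d$ for all $1\le i\le m$; (ii) $f(R_i)=d-\frac{k}{2}+1$ for all $1\le i\le m+1$; and, writing $R_i(1)=f^{-1}(1)\cap R_i$ and letting $\mathcal{T}_i\subseteq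 R_i\cup T_i\cup R_{i+1}$ be the maximal block containing $T_i$ such that $f(\mathcal{T}_i)=|\mathcal{T}_i|$ (i.e. on which $f\equiv 1$), for $1\le i\le m$: (iii) if $R_i(1)$ is not a block, then $|\mathcal{T}_i\setminus T_i|\ge d$; (iv) if $R_i(1)$ is a block and $R_i\cap\mathcal{T}_i=\emptyset$, then $R_{i+1}(1)$ is a block and there are at most $\frac{k}{2}-1$ elements $x$ with $f(x)=-1$ lying between $R_i(1)$ and $R_{i+1}(1)$. Finally $\mathcal{F}^-_{d,k}=\{-f : f\in\mathcal{F}^+_{d,k}\}$ and $\mathcal{F}_{d,k}=\mathcal{F}^+_{d,k}\cup\mathcal{F}^-_{d,k}$. *)

theory Defs
  imports Main
begin

(* Functions f : [n] -> {-1,1} are modelled as f :: nat => int; only values on {1..n} matter. *)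

definition is_block :: "nat set \<Rightarrow> bool" where
  "is_block B \<longleftrightarrow> (\<forall>x y z. x \<in> B \<longrightarrow> z \<in> B \<longrightarrow> x \<le> y \<longrightarrow> y \<le> z \<longrightarrow> y \<in> B)"

definition dk_block :: "nat \<Rightarrow> nat \<Rightarrow> nat \<Rightarrow> nat set \<Rightarrow> bool" where
  "dk_block d k n A \<longleftrightarrow> A \<subseteq> {1..n} \<and>
     (\<exists>a::nat \<Rightarrow> nat. strict_mono_on {0..<k} a \<and> A = a ` {0..<k} \<and>
        (\<forall>i. Suc i < k \<longrightarrow> a (Suc i) - a i \<le> d))"

definition pm_m :: "nat \<Rightarrow> nat \<Rightarrow> nat" where
  "pm_m k s = (k - 2*s - 2) div 4"

definition pm_b :: "nat \<Rightarrow> nat \<Rightarrow> nat" where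
  "pm_b d k = (d + 1) * (k div 2) + d - 1"

definition pm_r :: "nat \<Rightarrow> nat \<Rightarrow> nat \<Rightarrow> nat" where
  "pm_r d k s = k div 2 - 1 + d * s"

definition R_set :: "nat \<Rightarrow> nat \<Rightarrow> nat \<Rightarrow> nat \<Rightarrow> nat set" where
  "R_set d k s i = {(i - 1) * pm_b d k + 1 .. (i - 1) * pm_b d k + pm_r d k s}"

definition T_set :: "nat \<Rightarrow> nat \<Rightarrow> nat \<Rightarrow> nat \<Rightarrow> nat set" where
  "T_set d k s i = {(i - 1) * pm_b d k + k div 2 + d * s .. i * pm_b d k}"

definition R_one :: "nat \<Rightarrow> nat \<Rightarrow> nat \<Rightarrow> (nat \<Rightarrow> int) \<Rightarrow> nat \<Rightarrow> nat set" where
  "R_one d k s f i = {x \<in> R_set d k s i. f x = 1}"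

(* the maximal block \<T>_i with T_i \<subseteq> \<T>_i \<subseteq> R_i \<union> T_i \<union> R_{i+1} on which f \<equiv> 1 *)
definition calT :: "nat \<Rightarrow> nat \<Rightarrow> nat \<Rightarrow> (nat \<Rightarrow> int) \<Rightarrow> nat \<Rightarrow> nat set" where
  "calT d k s f i = (GREATEST B. is_block B \<and> T_set d k s i \<subseteq> B \<and>
       B \<subseteq> R_set d k s i \<union> T_set d k s i \<union> R_set d k s (i + 1) \<and> sum f B = int (card B))"

definition F1 :: "nat \<Rightarrow> nat \<Rightarrow> nat \<Rightarrow> (nat \<Rightarrow> int) \<Rightarrow> bool" where
  "F1 d k s f \<longleftrightarrow>
     (\<forall>i \<in> {1..pm_m k s + 1}. \<forall>x \<in> R_set d k s i. f x = -1) \<and>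
     (\<forall>i \<in> {1..pm_m k s}. \<forall>x \<in> T_set d k s i. f x = 1)"

definition F2 :: "nat \<Rightarrow> nat \<Rightarrow> nat \<Rightarrow> (nat \<Rightarrow> int) \<Rightarrow> bool" where
  "F2 d k s f \<longleftrightarrow>
     (\<forall>i \<in> {1..pm_m k s}. sum f (T_set d k s i) = int (card (T_set d k s i))
                          \<and> int (card (T_set d k s i)) = int (k div 2) * int d) \<and>
     (\<forall>i \<in> {1..pm_m k s + 1}. sum f (R_set d k s i) = int d - int (k div 2) + 1) \<and>
     (\<forall>i \<in> {1..pm_m k s}.
        (\<not> is_block (R_one d k s f i) \<longrightarrow> card (calT d k s f i - T_set d k s i) \<ge> d) \<and>
        (is_block (R_one d k s f i) \<and> R_set d k s i \<inter> calT d k s f i = {} \<longrightarrow>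
           is_block (R_one d k s f (i + 1)) \<and>
           card {x. (\<forall>y \<in> R_one d k s f i. \<forall>z \<in> R_one d k s f (i + 1). y < x \<and> x < z)
                    \<and> f x = -1} \<le> k div 2 - 1))"

definition F_plus :: "nat \<Rightarrow> nat \<Rightarrow> nat \<Rightarrow> (nat \<Rightarrow> int) \<Rightarrow> bool" where
  "F_plus d k s f \<longleftrightarrow> (s = 0 \<longrightarrow> F1 d k s f) \<and> (s = 1 \<longrightarrow> F2 d k s f)"

definition F_minus :: "nat \<Rightarrow> nat \<Rightarrow> nat \<Rightarrow> (nat \<Rightarrow> int) \<Rightarrow> bool" where
  "F_minus d k s f \<longleftrightarrow> F_plus d k s (\<lambda>x. - f x)"

definition F_fam :: "nat \<Rightarrow> nat \<Rightarrow> nat \<Rightarrow> (nat \<Rightarrow> int) \<Rightarrow> bool" where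
  "F_fam d k s f \<longleftrightarrow> F_plus d k s f \<or> F_minus d k s f"

end

theory Submission
  imports Defs
begin


definition chain :: "nat \<Rightarrow> nat set \<Rightarrow> bool" where
  "chain d A \<longleftrightarrow> (\<forall>u\<in>A. \<forall>v\<in>A. \<forall>p. u \<le> p \<and> p < v \<longrightarrow> (\<exists>z\<in>A. p < z \<and> z \<le> p + d))"

lemma chainD: "chain d A \<Longrightarrow> u \<in> A \<Longrightarrow> v \<in> A \<Longrightarrow> u \<le> p \<Longrightarrow> p < v \<Longrightarrow> \<exists>z\<in>A. p < z \<and> z \<le> p + d"
  unfolding chain_def by blast

lemma chain_single: "chain d {a}"
  unfolding chain_def by auto

lemma chain_interval: "d \<ge> 1 \<Longrightarrow> chain d {a..b}"
  unfolding chain_def by (auto intro!: bexI[where x="Suc _"])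

lemma chain_count:
  assumes "chain d A" "x \<in> A" "y \<in> A" "x < y" "finite A" "d \<ge> 1"
  shows "card (A \<inter> {x<..<y}) \<ge> (y - x - 1) div d"
  using assms
proof (induction "y - x" arbitrary: x rule: less_induct)
  case less
  obtain z where z: "z \<in> A" "x < z" "z \<le> x + d" using chainD[OF less.prems(1,2,3)] less.prems(4) by auto
  show ?case
  proof (cases "z < y")
    case True
    have ih: "card (A \<inter> {z<..<y}) \<ge> (y - z - 1) div d"
      using less.hyps[of z] less.prems z True by auto
    have sub: "insert z (A \<inter> {z<..<y}) \<subseteq> A \<inter> {x<..<y}" using z True by auto
    have "card (insert z (A \<inter> {z<..<y})) = Suc (card (A \<inter> {z<..<y}))"
      using less.prems(5) by simp
    moreover have "card (insert z (A \<inter> {z<..<y})) \<le> card (A \<inter> {x<..<y})"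
      using sub less.prems(5) by (intro card_mono) auto
    moreover have "(y - x - 1) div d \<le> Suc ((y - z - 1) div d)"
    proof -
      have "y - x - 1 \<le> (y - z - 1) + d" using z True by auto
      hence "(y - x - 1) div d \<le> ((y - z - 1) + d) div d" by (rule div_le_mono)
      also have "\<dots> = Suc ((y - z - 1) div d)" using less.prems(6) by (simp add: div_add_self2)
      finally show ?thesis .
    qed
    ultimately show ?thesis using ih by linarith
  next
    case False
    hence "y - x - 1 < d" using z by auto
    thus ?thesis by simp
  qed
qed

lemma chain_prog:
  assumes X: "chain d X" "x \<in> X" "\<forall>w\<in>X. w \<le> x"
    and Y: "chain d Y" "y \<in> Y" "\<forall>w\<in>Y. y \<le> w"
    and xy: "x + t*d < y" "y \<le> x + (t+1)*d" and d: "d \<ge> 1"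
  shows "chain d (X \<union> {x + j*d | j. 1 \<le> j \<and> j \<le> t} \<union> Y)"
  unfolding chain_def
proof (intro ballI allI impI)
  let ?P = "{x + j*d | j. 1 \<le> j \<and> j \<le> t}"
  let ?S = "X \<union> ?P \<union> Y"
  fix u v p assume u: "u \<in> ?S" and v: "v \<in> ?S" and p: "u \<le> p \<and> p < v"
  have Pb: "x < w \<and> w < y" if wP: "w \<in> ?P" for w
  proof -
    obtain j where j: "w = x + j*d" "1 \<le> j" "j \<le> t" using wP by blast
    have "j*d \<le> t*d" using j by simp
    moreover have "1*1 \<le> j*d" using j d by (intro mult_le_mono) auto
    ultimately show ?thesis using j xy by linarith
  qed
  show "\<exists>z\<in>?S. p < z \<and> z \<le> p + d"
  proof (cases "p < x")
    case True
    have "u \<notin> ?P" using Pb p True by force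
    moreover have "u \<notin> Y" using Y(3) p True xy by force
    ultimately have "u \<in> X" using u by blast
    then obtain z where "z \<in> X" "p < z" "z \<le> p + d" using chainD[OF X(1) _ X(2)] p True by blast
    thus ?thesis by auto
  next
    case px: False
    show ?thesis
    proof (cases "p \<ge> y")
      case True
      have "v \<notin> ?P" using Pb p True by force
      moreover have "v \<notin> X" using X(3) p True xy by force
      ultimately have "v \<in> Y" using v by blast
      then obtain z where "z \<in> Y" "p < z" "z \<le> p + d" using chainD[OF Y(1) Y(2)] p True by blast
      thus ?thesis by auto
    next
      case False
      define j where "j = (p - x) div d + 1"
      have jd: "x + j*d > p" "x + j * d \<le> p + d"
      proof -
        have e: "d * ((p-x) div d) + (p - x) mod d = p - x" by (rule mult_div_mod_eq)
        moreover have "(p - x) mod d < d" using d by simp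
        moreover have "j * d = d * ((p-x) div d) + d" unfolding j_def by (simp add: algebra_simps)
        ultimately show "x + j*d > p" "x + j * d \<le> p + d" using px by linarith+
      qed
      show ?thesis
      proof (cases "j \<le> t")
        case True
        moreover have "1 \<le> j" unfolding j_def by simp
        ultimately have "x + j*d \<in> ?P" by blast
        thus ?thesis using jd by blast
      next
        case False
        hence "t \<le> (p - x) div d" unfolding j_def by simp
        hence "t * d \<le> ((p - x) div d) * d" by simp
        also have "\<dots> \<le> p - x" by simp
        finally have "x + t*d \<le> p" using px by simp
        hence "y \<le> p + d" using xy by (simp add: algebra_simps)
        moreover have "p < y" using \<open>\<not> y \<le> p\<close> by simp
        ultimately show ?thesis using Y(2) by blast
      qed
    qed
  qed
qed


definition good :: "nat \<Rightarrow> nat \<Rightarrow> nat \<Rightarrow> nat set \<Rightarrow> bool" where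
  "good d k n A \<longleftrightarrow> A \<subseteq> {1..n} \<and> card A = k \<and> chain d A"

lemma dk_block_good:
  assumes "dk_block d k n A"
  shows "good d k n A"
proof -
  obtain a where a: "strict_mono_on {0..<k} a" "A = a ` {0..<k}"
      "\<forall>i. Suc i < k \<longrightarrow> a (Suc i) - a i \<le> d" and sub: "A \<subseteq> {1..n}"
    using assms unfolding dk_block_def by blast
  have lt: "a i < a j" if "i < j" "j < k" for i j
    using a(1) that unfolding strict_mono_on_def by auto
  have le: "a i \<le> a j" if "i \<le> j" "j < k" for i j
    using lt[of i j] that by (cases "i = j") auto
  have card: "card A = k"
    using a(2) strict_mono_on_imp_inj_on[OF a(1)] by (simp add: card_image)
  have "chain d A"
    unfolding chain_def
  proof (intro ballI allI impI)
    fix u v p assume u: "u \<in> A" and v: "v \<in> A" and p: "u \<le> p \<and> p < v"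
    obtain i where i: "i < k" "u = a i" using u a(2) by auto
    obtain j where j: "j < k" "v = a j" using v a(2) by auto
    let ?I = "{t. t < k \<and> a t \<le> p}"
    have fin: "finite ?I" by simp
    have iI: "i \<in> ?I" using i p by simp
    define t0 where "t0 = Max ?I"
    have t0I: "t0 \<in> ?I" unfolding t0_def using fin iI by (intro Max_in) auto
    have t0max: "t \<le> t0" if "t \<in> ?I" for t unfolding t0_def using fin that by simp
    have "t0 < j"
    proof (rule ccontr)
      assume "\<not> t0 < j"
      hence "a j \<le> a t0" using le[of j t0] t0I by simp
      thus False using t0I p j by simp
    qed
    hence sk: "Suc t0 < k" using j by simp
    have gt: "p < a (Suc t0)"
    proof (rule ccontr)
      assume "\<not> p < a (Suc t0)"
      hence "Suc t0 \<in> ?I" using sk by simp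
      thus False using t0max by fastforce
    qed
    have "a (Suc t0) - a t0 \<le> d" using a(3) sk by blast
    moreover have "a t0 \<le> p" using t0I by simp
    ultimately have "a (Suc t0) \<le> p + d" using gt by arith
    moreover have "a (Suc t0) \<in> A" using a(2) sk by simp
    ultimately show "\<exists>z\<in>A. p < z \<and> z \<le> p + d" using gt by blast
  qed
  thus ?thesis unfolding good_def using card sub by simp
qed

lemma good_dk_block:
  assumes "good d k n A"
  shows "dk_block d k n A"
proof -
  have sub: "A \<subseteq> {1..n}" and card: "card A = k" and ch: "chain d A"
    using assms unfolding good_def by auto
  have fin: "finite A" using sub finite_subset by blast
  obtain l where sw: "sorted_wrt (<) l" and l: "set l = A" "length l = card A"
    using finite_set_strict_sorted[OF fin] by blast
  define a where "a = (\<lambda>i. l ! i)"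
  have lt: "a i < a j" if "i < j" "j < k" for i j
    unfolding a_def using sorted_wrt_nth_less[OF sw that(1)] that l(2) card by simp
  have smo: "strict_mono_on {0..<k} a" unfolding strict_mono_on_def using lt by auto
  have img: "A = a ` {0..<k}"
    unfolding a_def using l(1,2) card by (auto simp: in_set_conv_nth)
  have gap: "a (Suc i) - a i \<le> d" if si: "Suc i < k" for i
  proof -
    have ai: "a i \<in> A" "a (Suc i) \<in> A" using img si by auto
    have "a i < a (Suc i)" using lt si by simp
    then obtain z where z: "z \<in> A" "a i < z" "z \<le> a i + d" using chainD[OF ch ai(1) ai(2)] by auto
    obtain j where j: "j < k" "z = a j" using z(1) img by auto
    have "i < j"
    proof (rule ccontr)
      assume "\<not> i < j"
      hence "a j \<le> a i" using lt[of j i] si by (cases "i = j") auto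
      thus False using z j by simp
    qed
    hence "a (Suc i) \<le> a j" using lt[of "Suc i" j] j by (cases "Suc i = j") auto
    thus ?thesis using z j by simp
  qed
  show ?thesis unfolding dk_block_def using sub smo img gap by blast
qed

lemma pad:
  assumes "chain d S" "S \<subseteq> {1..n}" "S \<noteq> {}" "card S \<le> k" "k \<le> n" "d \<ge> 1"
  shows "\<exists>A. S \<subseteq> A \<and> good d k n A"
  using assms
proof (induction "k - card S" arbitrary: S)
  case 0
  thus ?case unfolding good_def by auto
next
  case (Suc x)
  have fin: "finite S" using Suc.prems(2) finite_subset by blast
  have lt: "card S < k" using Suc.hyps(2) by simp
  let ?mi = "Min S" and ?ma = "Max S"
  have mi: "?mi \<in> S" "\<And>z. z \<in> S \<Longrightarrow> ?mi \<le> z" using fin Suc.prems(3) by auto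
  have ma: "?ma \<in> S" "\<And>z. z \<in> S \<Longrightarrow> z \<le> ?ma" using fin Suc.prems(3) by auto
  obtain S' where S': "S \<subseteq> S'" "chain d S'" "S' \<subseteq> {1..n}" "card S' = Suc (card S)"
  proof (cases "{?mi..?ma} \<subseteq> S")
    case False
    then obtain z where z: "z \<in> {?mi..?ma}" "z \<notin> S" by blast
    have ch: "chain d (insert z S)"
      unfolding chain_def
    proof (intro ballI allI impI)
      fix u v p assume u: "u \<in> insert z S" and v: "v \<in> insert z S" and p: "u \<le> p \<and> p < v"
      have "?mi \<le> p" "p < ?ma" using u v p z mi ma by fastforce+
      then obtain w where "w \<in> S" "p < w" "w \<le> p + d" using chainD[OF Suc.prems(1) mi(1) ma(1)] by auto
      thus "\<exists>w\<in>insert z S. p < w \<and> w \<le> p + d" by blast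
    qed
    show ?thesis
      by (rule that[of "insert z S"]) (use ch z Suc.prems(2) mi ma fin in auto)
  next
    case True
    hence Seq: "S = {?mi..?ma}" using mi ma by auto
    obtain lo hi where lh: "lo = ?mi" "hi = ?ma" by blast
    have S2: "S = {lo..hi}" using Seq lh by simp
    have lohi: "lo \<le> hi" using S2 Suc.prems(3) by auto
    have cS: "card S = hi + 1 - lo" using S2 by simp
    show ?thesis
    proof (cases "lo > 1")
      case True
      have "insert (lo - 1) S = {lo - 1..hi}" using S2 True lohi by auto
      moreover have "card {lo - 1..hi} = Suc (card S)" using cS True lohi by auto
      moreover have "{lo - 1..hi} \<subseteq> {1..n}" using S2 Suc.prems(2) True lohi by auto
      ultimately show ?thesis
        using that[of "insert (lo - 1) S"] chain_interval[OF Suc.prems(6), of "lo - 1" hi] by auto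
    next
      case False
      hence "lo = 1" using Suc.prems(2) S2 lohi by fastforce
      hence "hi < n" using cS lt Suc.prems(5) by simp
      have "insert (hi + 1) S = {lo..hi+1}" using S2 lohi by auto
      moreover have "card {lo..hi + 1} = Suc (card S)" using cS lohi by auto
      moreover have "{lo..hi+1} \<subseteq> {1..n}" using \<open>lo = 1\<close> \<open>hi < n\<close> by auto
      ultimately show ?thesis
        using that[of "insert (hi + 1) S"] chain_interval[OF Suc.prems(6), of lo "hi + 1"] by auto
    qed
  qed
  have "x = k - card S'" using Suc.hyps(2) S'(4) by simp
  moreover have "S' \<noteq> {}" using S'(1) Suc.prems(3) by auto
  moreover have "card S' \<le> k" using S'(4) lt by simp
  ultimately obtain A where "S' \<subseteq> A" "good d k n A"
    using Suc.hyps(1)[of S'] S' Suc.prems by blast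
  thus ?case using S'(1) by blast
qed


locale setting =
  fixes d k s m L K b r n :: nat
  assumes d2: "d \<ge> 2" and m1: "m \<ge> 1" and s1: "s \<le> 1"
    and kL: "k = 2*L + 2" and KL: "K = L + 2" and bL: "b = L + d*K" and rL: "r = L + s*d"
    and Lm: "L = 2*m + s" and nm: "n = m*b + r"
begin
lemma L2: "L \<ge> 2" using Lm m1 by simp
lemma n2k: "2*k \<le> n"
proof -
  have "b \<le> m*b" using m1 by simp
  moreover have "2*K \<le> d*K" using d2 by simp
  moreover have "n \<ge> b + L" using nm rL \<open>b \<le> m*b\<close> by linarith
  ultimately show ?thesis using bL kL KL by simp
qed
end

locale fsetting = setting +
  fixes f :: "nat \<Rightarrow> int"
  assumes pm: "\<forall>x\<in>{1..n}. f x = 1 \<or> f x = -1"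
begin

definition N :: "nat \<Rightarrow> nat" where "N x = card {z\<in>{1..x}. f z = -1}"

lemma N_split: "x \<le> y \<Longrightarrow> N y = N x + card {z\<in>{x<..y}. f z = -1}"
proof -
  assume xy: "x \<le> y"
  have "{z\<in>{1..y}. f z = -1} = {z\<in>{1..x}. f z = -1} \<union> {z\<in>{x<..y}. f z = -1}" using xy by auto
  moreover have "{z\<in>{1..x}. f z = -1} \<inter> {z\<in>{x<..y}. f z = -1} = {}" by auto
  ultimately show ?thesis unfolding N_def by (simp add: card_Un_disjoint)
qed

lemma N_mono: "x \<le> y \<Longrightarrow> N x \<le> N y" using N_split by fastforce

lemma sum_pm:
  assumes "A \<subseteq> {1..n}"
  shows "sum f A = int (card A) - 2 * int (card {x\<in>A. f x = -1})"
proof -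
  have fin: "finite A" using assms finite_subset by blast
  let ?P = "{x\<in>A. f x = -1}" and ?Q = "{x\<in>A. f x \<noteq> -1}"
  have AU: "A = ?P \<union> ?Q" by auto
  have dj: "?P \<inter> ?Q = {}" by auto
  have sP: "sum f ?P = - int (card ?P)" by (simp add: sum.cong[of ?P ?P f "\<lambda>_. -1"])
  have "sum f ?Q = sum (\<lambda>_. 1) ?Q" using assms pm by (intro sum.cong) auto
  hence sQ: "sum f ?Q = int (card ?Q)" by simp
  have "sum f A = sum f ?P + sum f ?Q" using fin dj by (subst AU) (rule sum.union_disjoint, auto)
  moreover have "card A = card ?P + card ?Q" using fin dj by (subst AU) (rule card_Un_disjoint, auto)
  ultimately show ?thesis using sP sQ by simp
qed

abbreviation cm :: "nat set \<Rightarrow> nat" where "cm A \<equiv> card {x\<in>A. f x = -1}"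

lemma good_sum: "good d k n A \<Longrightarrow> sum f A = int k - 2 * int (cm A)"
  using sum_pm unfolding good_def by simp

lemma good_pos: "good d k n A \<Longrightarrow> (0 < sum f A \<longleftrightarrow> cm A \<le> L)"
  using good_sum kL by auto

lemma good_zero: "good d k n A \<Longrightarrow> (sum f A = 0 \<longleftrightarrow> cm A = L + 1)"
  using good_sum kL by auto

lemma swap_sign:
  assumes noZ: "\<forall>A. good d k n A \<longrightarrow> sum f A \<noteq> 0"
    and A: "good d k n A" and B: "good d k n B" and w: "w \<in> A" and y: "y \<notin> A"
    and BA: "B = insert y (A - {w})"
  shows "0 < sum f A \<longleftrightarrow> 0 < sum f B"
proof -
  have fin: "finite A" using A unfolding good_def using finite_subset by blast
  have wy: "w \<in> {1..n}" "y \<in> {1..n}" using A B w BA unfolding good_def by auto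
  have "sum f B = sum f (A - {w}) + f y" using BA y fin by simp
  moreover have "sum f A = sum f (A - {w}) + f w" using w fin by (simp add: sum.remove)
  ultimately have df: "sum f B = sum f A - f w + f y" by simp
  have ev: "even (sum f A)" "even (sum f B)" using good_sum[OF A] good_sum[OF B] kL by auto
  have nz: "sum f A \<noteq> 0" "sum f B \<noteq> 0" using noZ A B by auto
  have "f w \<in> {-1,1}" "f y \<in> {-1,1}" using pm wy by auto
  hence "\<bar>sum f B - sum f A\<bar> \<le> 2" using df by auto
  moreover have "sum f A \<ge> 2 \<or> sum f A \<le> -2" using ev(1) nz(1) by presburger
  moreover have "sum f B \<ge> 2 \<or> sum f B \<le> -2" using ev(2) nz(2) by presburger
  ultimately show ?thesis by auto
qed

end


context fsetting begin

lemma good_interval: "1 \<le> a \<Longrightarrow> a + k - 1 \<le> n \<Longrightarrow> good d k n {a..a+k-1}"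
  unfolding good_def using chain_interval[of d a "a+k-1"] d2 kL by auto

lemma sign_norm:
  assumes noZ: "\<forall>A. good d k n A \<longrightarrow> sum f A \<noteq> 0"
  shows "good d k n A \<Longrightarrow> (0 < sum f A \<longleftrightarrow> 0 < sum f {Min A..Min A + k - 1})"
proof (induction "Max A - Min A" arbitrary: A rule: less_induct)
  case less
  note gA = less.prems
  have sub: "A \<subseteq> {1..n}" and cA: "card A = k" and ch: "chain d A" using gA unfolding good_def by auto
  have fin: "finite A" using sub finite_subset by blast
  have ne: "A \<noteq> {}" using cA kL by auto
  let ?mi = "Min A" and ?ma = "Max A"
  have mi: "?mi \<in> A" "\<And>z. z \<in> A \<Longrightarrow> ?mi \<le> z" using fin ne by auto
  have ma: "?ma \<in> A" "\<And>z. z \<in> A \<Longrightarrow> z \<le> ?ma" using fin ne by auto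
  have Asub: "A \<subseteq> {?mi..?ma}" using mi ma by auto
  show ?case
  proof (cases "{?mi..?ma} \<subseteq> A")
    case True
    hence "A = {?mi..?ma}" using Asub by auto
    hence "card {?mi..?ma} = k" using cA by simp
    hence "?ma = ?mi + k - 1" using kL by simp
    hence "A = {?mi..?mi + k - 1}" using \<open>A = {?mi..?ma}\<close> by simp
    thus ?thesis by simp
  next
    case False
    let ?G = "{?mi..?ma} - A"
    have Gne: "?G \<noteq> {}" using False by auto
    define y where "y = Min ?G"
    have yG: "y \<in> ?G" unfolding y_def using Gne by (intro Min_in) auto
    have ymin: "\<And>z. z \<in> ?G \<Longrightarrow> y \<le> z" unfolding y_def by simp
    have y1: "?mi < y" "y < ?ma" using yG mi ma by (auto simp: le_less)
    have ym1: "y - 1 \<in> A"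
    proof (rule ccontr)
      assume "y - 1 \<notin> A"
      hence "y - 1 \<in> ?G" using y1 yG by auto
      thus False using ymin[of "y - 1"] y1 by auto
    qed
    define B where "B = insert y (A - {?ma})"
    have yA: "y \<notin> A" using yG by simp
    have Bsub: "B \<subseteq> {1..n}" unfolding B_def using sub y1 mi ma by auto
    have "card (A - {?ma}) = k - 1" using cA ma(1) fin by simp
    moreover have "y \<notin> A - {?ma}" using yA by simp
    ultimately have cB: "card B = k" unfolding B_def using fin kL by simp
    have chB: "chain d B"
      unfolding chain_def
    proof (intro ballI allI impI)
      fix u v p assume u: "u \<in> B" and v: "v \<in> B" and p: "u \<le> p \<and> p < v"
      have "?mi \<le> u" using u y1 mi unfolding B_def by auto
      moreover have "v \<le> ?ma" using v y1 ma unfolding B_def by auto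
      ultimately obtain z where z: "z \<in> A" "p < z" "z \<le> p + d"
        using chainD[OF ch mi(1) ma(1), of p] p by auto
      show "\<exists>z\<in>B. p < z \<and> z \<le> p + d"
      proof (cases "z = ?ma")
        case False
        thus ?thesis using z unfolding B_def by blast
      next
        case True
        have "v \<in> A - {?ma} \<or> v = y" using v unfolding B_def by auto
        moreover have "v < ?ma" if "v \<in> A - {?ma}" using that ma by (auto simp: le_less)
        ultimately have "v < ?ma" using y1 by auto
        hence "v \<le> p + d" using True z by simp
        thus ?thesis using v p by blast
      qed
    qed
    have gB: "good d k n B" unfolding good_def using Bsub cB chB by simp
    have finB: "finite B" unfolding B_def using fin by simp
    have neB: "B \<noteq> {}" unfolding B_def by simp
    have miB: "Min B = ?mi"
    proof -
      have "?mi \<noteq> ?ma" using y1 by simp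
      hence "?mi \<in> B" unfolding B_def using mi by simp
      moreover have "\<forall>z\<in>B. ?mi \<le> z" unfolding B_def using mi y1 by auto
      ultimately show ?thesis using finB by (intro Min_eqI) auto
    qed
    have "Max B \<in> B" using finB neB by simp
    moreover have "\<forall>z\<in>B. z < ?ma" unfolding B_def using y1 ma by (auto simp: le_less)
    ultimately have "Max B < ?ma" by blast
    moreover have "Min B \<le> Max B" using finB neB by simp
    ultimately have "Max B - Min B < ?ma - ?mi" using miB by linarith
    hence ih: "0 < sum f B \<longleftrightarrow> 0 < sum f {?mi..?mi + k - 1}" using less.hyps[OF _ gB] miB by simp
    have "0 < sum f A \<longleftrightarrow> 0 < sum f B"
      using swap_sign[OF noZ gA gB ma(1) yA] unfolding B_def by simp
    thus ?thesis using ih by simp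
  qed
qed

lemma sign_intervals:
  assumes noZ: "\<forall>A. good d k n A \<longrightarrow> sum f A \<noteq> 0"
  shows "1 \<le> a \<Longrightarrow> a + k \<le> n + 1 \<Longrightarrow> (0 < sum f {a..<a+k} \<longleftrightarrow> 0 < sum f {1..<1+k})"
proof (induction a rule: nat_induct_at_least)
  case base thus ?case by simp
next
  case (Suc a)
  have k1: "k \<ge> 1" using kL by simp
  have e1: "{a..<a+k} = {a..a+k-1}" "{Suc a..<Suc a+k} = {Suc a..Suc a+k-1}" using k1 by auto
  have g1: "good d k n {a..<a+k}" using good_interval[of a] Suc e1 by simp
  have g2: "good d k n {Suc a..<Suc a+k}" using good_interval[of "Suc a"] Suc e1 by simp
  have ins: "{Suc a..<Suc a+k} = insert (a + k) ({a..<a+k} - {a})" using k1 by auto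
  have "a \<in> {a..<a+k}" "a + k \<notin> {a..<a+k}" using k1 by auto
  hence "0 < sum f {a..<a+k} \<longleftrightarrow> 0 < sum f {Suc a..<Suc a+k}"
    using swap_sign[OF noZ g1 g2, of a "a+k"] ins by blast
  thus ?case using Suc by simp
qed

lemma sign_const:
  assumes noZ: "\<forall>A. good d k n A \<longrightarrow> sum f A \<noteq> 0" and gA: "good d k n A"
  shows "0 < sum f A \<longleftrightarrow> 0 < sum f {1..k}"
proof -
  have sub: "A \<subseteq> {1..n}" and cA: "card A = k" using gA unfolding good_def by auto
  have fin: "finite A" using sub finite_subset by blast
  have ne: "A \<noteq> {}" using cA kL by auto
  have "Min A \<in> A" using fin ne by (rule Min_in)
  hence m1: "Min A \<ge> 1" using sub by auto
  have "Max A \<in> A" using fin ne by (rule Max_in)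
  hence mn: "Max A \<le> n" using sub by auto
  have "A \<subseteq> {Min A..Max A}" using fin ne by auto
  hence "card A \<le> card {Min A..Max A}" by (intro card_mono) auto
  moreover have "Min A \<le> Max A" using fin ne by simp
  ultimately have m2: "Min A + k \<le> n + 1" using cA mn by simp
  have e: "{Min A..Min A + k - 1} = {Min A..<Min A + k}" "{1..k} = {1..<1+k}" using kL by auto
  have "0 < sum f A \<longleftrightarrow> 0 < sum f {Min A..<Min A + k}" using sign_norm[OF noZ gA] e(1) by simp
  also have "\<dots> \<longleftrightarrow> 0 < sum f {1..<1+k}" using sign_intervals[OF noZ m1 m2] .
  finally show ?thesis using e(2) by simp
qed

lemma all_pos:
  assumes noZ: "\<forall>A. good d k n A \<longrightarrow> sum f A \<noteq> 0" and nM: "n = (d+1) * N n"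
  shows "good d k n A \<Longrightarrow> cm A \<le> L"
proof -
  have pos: "0 < sum f {1..k}"
  proof (rule ccontr)
    assume np: "\<not> 0 < sum f {1..k}"
    have neg: "cm A \<ge> L + 2" if "good d k n A" for A
    proof -
      have "\<not> 0 < sum f A" using sign_const[OF noZ that] np by simp
      moreover have "sum f A \<noteq> 0" using noZ that by simp
      ultimately show ?thesis using good_sum[OF that] kL by simp
    qed
    have Nj: "j*k \<le> n \<Longrightarrow> N (j*k) \<ge> j*(L+2)" for j
    proof (induction j)
      case 0 thus ?case by simp
    next
      case (Suc j)
      have gi: "good d k n {j*k+1..j*k+1+k-1}" using good_interval[of "j*k+1"] Suc.prems kL by simp
      have "{j*k+1..j*k+1+k-1} = {j*k<..Suc j*k}" using kL by auto
      hence "cm {j*k<..Suc j*k} \<ge> L + 2" using neg[OF gi] by simp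
      moreover have "N (Suc j*k) = N (j*k) + cm {j*k<..Suc j*k}" using N_split by simp
      ultimately show ?case using Suc by simp
    qed
    define q where "q = n div k"
    have e: "q * k + n mod k = n" unfolding q_def by (rule div_mult_mod_eq)
    have "n mod k < k" using kL by simp
    hence qk: "q*k \<le> n" "n < (q+1)*k" using e by simp_all
    have "(2*k) div k \<le> n div k" using n2k by (rule div_le_mono)
    moreover have "k > 0" using kL by simp
    hence "(2*k) div k = 2" by simp
    ultimately have q2: "q \<ge> 2" unfolding q_def by simp
    have "N n \<ge> q*(L+2)" using Nj[OF qk(1)] N_mono[OF qk(1)] by simp
    moreover have "3 * N n \<le> (d+1) * N n" using d2 by (intro mult_le_mono1) simp
    ultimately have "n \<ge> 3*(q*(L+2))" using nM by linarith
    moreover have "(q+1)*k \<le> 3*(q*(L+2))"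
    proof -
      have a: "2*L \<le> q*L" using q2 by simp
      have b: "(q+1)*k = 2*(q*L) + 2*q + 2*L + 2" using kL by (simp add: algebra_simps)
      have c: "3*(q*(L+2)) = 3*(q*L) + 6*q" by (simp add: algebra_simps)
      show ?thesis using a b c q2 by linarith
    qed
    ultimately show False using qk by simp
  qed
  assume gA: "good d k n A"
  hence "0 < sum f A" using sign_const[OF noZ gA] pos by simp
  thus ?thesis using good_pos[OF gA] by simp
qed

end


lemma div_add_le_nat: "(x::nat) div d + y div d \<le> (x + y) div d"
proof (cases "d = 0")
  case False
  have "(x div d + y div d) * d = (x div d) * d + (y div d) * d" by (simp add: algebra_simps)
  also have "\<dots> \<le> x + y" using div_times_less_eq_dividend[of x d] div_times_less_eq_dividend[of y d] by linarith
  finally show ?thesis using False by (simp add: less_eq_div_iff_mult_less_eq)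
qed simp

lemma card_prog: "card {x + j*d | j. 1 \<le> j \<and> j \<le> (t::nat)} \<le> t"
proof -
  have "{x + j*d | j. 1 \<le> j \<and> j \<le> t} = (\<lambda>j. x + j*d) ` {1..t}" by auto
  thus ?thesis using card_image_le[of "{1..t}" "\<lambda>j. x + j*d"] by simp
qed

lemma prog_bounds: "w \<in> {x + j*d | j. 1 \<le> j \<and> j \<le> t} \<Longrightarrow> (d::nat) \<ge> 1 \<Longrightarrow> x < w \<and> w \<le> x + t*d"
proof -
  assume w: "w \<in> {x + j*d | j. 1 \<le> j \<and> j \<le> t}" and d: "d \<ge> 1"
  obtain j where j: "w = x + j*d" "1 \<le> j" "j \<le> t" using w by blast
  have "j*d \<le> t*d" using j by simp
  moreover have "1*1 \<le> j*d" using j d by (intro mult_le_mono) auto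
  ultimately show ?thesis using j by linarith
qed

context fsetting begin

lemma lemmaQ:
  "a \<le> a' \<Longrightarrow> a' \<le> n \<Longrightarrow> 1 \<le> a \<Longrightarrow> f a = -1 \<Longrightarrow> f a' = -1 \<Longrightarrow>
   \<exists>S. {z\<in>{a..a'}. f z = -1} \<subseteq> S \<and> S \<subseteq> {a..a'} \<and> a \<in> S \<and> chain d S \<and>
       card S \<le> cm {a..a'} + (a' + 1 - a - cm {a..a'}) div d"
proof (induction "a' - a" arbitrary: a rule: less_induct)
  case less
  show ?case
  proof (cases "a = a'")
    case True
    have "{z\<in>{a..a'}. f z = -1} = {a}" using True less.prems by auto
    thus ?thesis using True chain_single[of d a] by (intro exI[of _ "{a}"]) simp
  next
    case False
    hence aa: "a < a'" using less.prems by simp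
    let ?G = "{z\<in>{a<..a'}. f z = -1}"
    have Gne: "a' \<in> ?G" using aa less.prems by simp
    define a1 where "a1 = Min ?G"
    have a1G: "a1 \<in> ?G" unfolding a1_def using Gne by (intro Min_in) auto
    have a1min: "\<And>z. z \<in> ?G \<Longrightarrow> a1 \<le> z" unfolding a1_def by simp
    have a1b: "a < a1" "a1 \<le> a'" "f a1 = -1" using a1G by auto
    have lt: "a' - a1 < a' - a" using a1b by simp
    have "\<exists>S. {z\<in>{a1..a'}. f z = -1} \<subseteq> S \<and> S \<subseteq> {a1..a'} \<and> a1 \<in> S \<and> chain d S \<and>
       card S \<le> cm {a1..a'} + (a' + 1 - a1 - cm {a1..a'}) div d"
      by (rule less.hyps[OF lt]) (use a1b less.prems in auto)
    then obtain S1 where S1: "{z\<in>{a1..a'}. f z = -1} \<subseteq> S1" "S1 \<subseteq> {a1..a'}" "a1 \<in> S1" "chain d S1"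
        "card S1 \<le> cm {a1..a'} + (a' + 1 - a1 - cm {a1..a'}) div d" by blast
    define t where "t = (a1 - a - 1) div d"
    let ?P = "{a + j*d | j. 1 \<le> j \<and> j \<le> t}"
    have d1: "d \<ge> 1" using d2 by simp
    have td1: "t*d \<le> a1 - a - 1" unfolding t_def by (rule div_times_less_eq_dividend)
    have td2: "a1 - a - 1 < (t+1)*d"
    proof -
      have e: "t * d + (a1 - a - 1) mod d = a1 - a - 1" unfolding t_def by (rule div_mult_mod_eq)
      have "(a1 - a - 1) mod d < d" using d1 by simp
      thus ?thesis using e by simp
    qed
    have c1: "a + t*d < a1" using td1 a1b by linarith
    have c2: "a1 \<le> a + (t+1)*d" using td2 a1b by linarith
    define S where "S = {a} \<union> ?P \<union> S1"
    have chS: "chain d S" unfolding S_def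
      by (rule chain_prog[OF chain_single _ _ S1(4) S1(3) _ c1 c2 d1]) (use S1(2) in auto)
    have Pb: "a < w \<and> w < a1" if "w \<in> ?P" for w
      using prog_bounds[OF that d1] c1 by linarith
    have "?P \<subseteq> {a..a'}"
    proof
      fix w assume "w \<in> ?P"
      thus "w \<in> {a..a'}" using Pb[of w] a1b by simp
    qed
    hence sub: "S \<subseteq> {a..a'}" unfolding S_def using S1(2) a1b by auto
    have minus: "{z\<in>{a..a'}. f z = -1} \<subseteq> S"
    proof
      fix z assume z: "z \<in> {z\<in>{a..a'}. f z = -1}"
      show "z \<in> S"
      proof (cases "z = a")
        case False
        hence "z \<in> ?G" using z by auto
        hence "a1 \<le> z" by (rule a1min)
        thus ?thesis using z S1(1) unfolding S_def by auto
      qed (simp add: S_def)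
    qed
    have cS: "card S \<le> 1 + t + card S1"
    proof -
      have "card S \<le> card ({a} \<union> ?P) + card S1" unfolding S_def by (rule card_Un_le)
      moreover have "card ({a} \<union> ?P) \<le> card {a} + card ?P" by (rule card_Un_le)
      ultimately show ?thesis using card_prog[of a d t] by simp
    qed
    have split: "{z\<in>{a..a'}. f z = -1} = insert a {z\<in>{a1..a'}. f z = -1}"
    proof
      show "{z\<in>{a..a'}. f z = -1} \<subseteq> insert a {z\<in>{a1..a'}. f z = -1}"
        using a1min aa by fastforce
      show "insert a {z\<in>{a1..a'}. f z = -1} \<subseteq> {z\<in>{a..a'}. f z = -1}"
        using less.prems a1b by auto
    qed
    have cms: "cm {a..a'} = Suc (cm {a1..a'})" unfolding split using a1b by simp
    have "cm {a1..a'} \<le> card {a1..a'}" by (intro card_mono) auto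
    hence cb: "cm {a1..a'} \<le> a' + 1 - a1" by simp
    have o: "a' + 1 - a - cm {a..a'} = (a1 - a - 1) + (a' + 1 - a1 - cm {a1..a'})"
      using cms cb a1b by simp
    have "t + (a' + 1 - a1 - cm {a1..a'}) div d \<le> (a' + 1 - a - cm {a..a'}) div d"
      unfolding o t_def by (rule div_add_le_nat)
    hence "card S \<le> cm {a..a'} + (a' + 1 - a - cm {a..a'}) div d" using cS S1(5) cms by linarith
    thus ?thesis using minus sub chS unfolding S_def by (intro exI[of _ S]) (auto simp: S_def)
  qed
qed

lemma P1:
  assumes allpos: "\<And>A. good d k n A \<Longrightarrow> cm A \<le> L"
  shows "x + \<delta> \<le> n \<Longrightarrow> \<delta> \<le> b \<Longrightarrow> cm {x<..x+\<delta>} \<le> L"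
proof (induction \<delta> arbitrary: x rule: less_induct)
  case (less \<delta>)
  show ?case
  proof (rule ccontr)
    assume cx: "\<not> cm {x<..x+\<delta>} \<le> L"
    hence "\<delta> \<noteq> 0" by (cases "\<delta> = 0") auto
    then obtain e where e: "\<delta> = Suc e" by (cases \<delta>) auto
    have ih1: "cm {x<..x+e} \<le> L" using less.IH[of e x] less.prems e by simp
    have ih2: "cm {Suc x<..Suc x+e} \<le> L" using less.IH[of e "Suc x"] less.prems e by simp
    have s1: "{z\<in>{x<..x+\<delta>}. f z = -1} = {z\<in>{x<..x+e}. f z = -1} \<union> {z\<in>{x+\<delta>}. f z = -1}"
      using e by auto
    have "cm {x<..x+\<delta>} \<le> cm {x<..x+e} + card {z\<in>{x+\<delta>}. f z = -1}"
      unfolding s1 by (rule card_Un_le)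
    note h1 = this
    have fy: "f (x+\<delta>) = -1"
    proof (rule ccontr)
      assume "f (x+\<delta>) \<noteq> -1"
      hence "{z\<in>{x+\<delta>}. f z = -1} = {}" by auto
      hence "card {z\<in>{x+\<delta>}. f z = -1} = 0" by (simp only: card.empty)
      thus False using h1 ih1 cx by linarith
    qed
    have s2: "{z\<in>{x<..x+\<delta>}. f z = -1} = {z\<in>{Suc x}. f z = -1} \<union> {z\<in>{Suc x<..Suc x+e}. f z = -1}"
      using e by auto
    have "cm {x<..x+\<delta>} \<le> card {z\<in>{Suc x}. f z = -1} + cm {Suc x<..Suc x+e}"
      unfolding s2 by (rule card_Un_le)
    note h2 = this
    have fx: "f (Suc x) = -1"
    proof (rule ccontr)
      assume "f (Suc x) \<noteq> -1"
      hence "{z\<in>{Suc x}. f z = -1} = {}" by auto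
      hence "card {z\<in>{Suc x}. f z = -1} = 0" by (simp only: card.empty)
      thus False using h2 ih2 cx by linarith
    qed
    have "card {z\<in>{x+\<delta>}. f z = -1} \<le> card {x+\<delta>}" by (intro card_mono) auto
    moreover have "card {x+\<delta>} = 1" by simp
    ultimately have "card {z\<in>{x+\<delta>}. f z = -1} \<le> 1" by linarith
    hence "cm {x<..x+\<delta>} \<le> L + 1" using h1 ih1 by linarith
    hence c1: "cm {x<..x+\<delta>} = L + 1" using cx by linarith
    have eqi: "{x<..x+\<delta>} = {Suc x..x+\<delta>}" by auto
    have cL: "cm {Suc x..x+\<delta>} = L + 1" using c1 unfolding eqi .
    obtain S where S: "{z\<in>{Suc x..x+\<delta>}. f z = -1} \<subseteq> S" "S \<subseteq> {Suc x..x+\<delta>}" "Suc x \<in> S" "chain d S"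
        "card S \<le> cm {Suc x..x+\<delta>} + (x+\<delta> + 1 - Suc x - cm {Suc x..x+\<delta>}) div d"
      using lemmaQ[of "Suc x" "x+\<delta>"] e less.prems fx fy by auto
    have "x+\<delta> + 1 - Suc x - cm {Suc x..x+\<delta>} \<le> d*K - 1" using cL less.prems bL by simp
    hence "(x+\<delta> + 1 - Suc x - cm {Suc x..x+\<delta>}) div d \<le> (d*K - 1) div d" by (rule div_le_mono)
    also have "(d*K - 1) div d = K - 1"
    proof -
      have e: "d*K - 1 = (d - 1) + (K-1)*d" using d2 KL by (simp add: algebra_simps)
      have "((d - 1) + (K-1)*d) div d = (K-1) + (d-1) div d" using d2 by (intro div_mult_self1) simp
      moreover have "(d-1) div d = 0" using d2 by simp
      ultimately show ?thesis using e by simp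
    qed
    finally have cSk: "card S \<le> k" using S(5) cL kL KL by simp
    have Ssub: "S \<subseteq> {1..n}" using S(2) less.prems by auto
    obtain A where A: "S \<subseteq> A" "good d k n A"
      using pad[OF S(4) Ssub _ cSk _ ] S(3) n2k d2 by auto
    have finA: "finite A" using A(2) unfolding good_def using finite_subset by blast
    have sb: "{z\<in>{Suc x..x+\<delta>}. f z = -1} \<subseteq> {z\<in>A. f z = -1}" using S(1) A(1) by auto
    have "cm {Suc x..x+\<delta>} \<le> cm A" using finA by (intro card_mono[OF _ sb]) simp
    hence "cm A \<ge> L + 1" using cL by simp
    thus False using allpos[OF A(2)] by simp
  qed
qed

end


context setting begin
definition RR :: "nat \<Rightarrow> nat set" where "RR i = {(i-1)*b<..(i-1)*b+r}"
definition TT :: "nat \<Rightarrow> nat set" where "TT i = {(i-1)*b+r<..i*b}"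

lemma Ks: "s \<le> K" using s1 KL by simp
lemma b_r: "b = r + d*(K-s)"
proof -
  have "d*(K-s) + d*s = d*K" using Ks by (simp add: diff_mult_distrib2)
  thus ?thesis using bL rL by (simp add: algebra_simps)
qed
lemma r_lt_b: "r < b" using b_r d2 KL s1 by simp
lemma r_le_n: "r \<le> n" using nm by simp
lemma jb_le: "j \<le> m \<Longrightarrow> j*b + r \<le> n" using nm by simp
end

context fsetting begin

lemma cm_N: "x \<le> y \<Longrightarrow> cm {x<..y} = N y - N x" using N_split[of x y] by simp

lemma structA:
  assumes allpos: "\<And>A. good d k n A \<Longrightarrow> cm A \<le> L" and NM: "N n = (m+1)*L"
  shows "\<forall>i\<in>{1..m+1}. cm (RR i) = L" "\<forall>i\<in>{1..m}. cm (TT i) = 0"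
proof -
  have P: "cm {x<..x+b} \<le> L" if "x + b \<le> n" for x using P1[OF allpos that] by simp
  have S1: "j \<le> m \<Longrightarrow> N (j*b) \<le> j*L" for j
  proof (induction j)
    case (Suc j)
    have "Suc j * b \<le> n" using Suc.prems jb_le[of "Suc j"] by simp
    hence "cm {j*b<..j*b+b} \<le> L" using P by simp
    moreover have "N (j*b + b) = N (j*b) + cm {j*b<..j*b+b}" using N_split by simp
    ultimately show ?case using Suc by (simp add: algebra_simps)
  qed (simp add: N_def)
  have S2: "t \<le> m \<Longrightarrow> N (m*b + r) \<le> N ((m-t)*b + r) + t*L" for t
  proof (induction t)
    case (Suc t)
    have e: "(m - t)*b + r = (m - Suc t)*b + r + b" using Suc.prems
      by (metis Suc_diff_Suc Suc_le_lessD add.commute add.left_commute mult_Suc)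
    have "(m - t)*b + r \<le> n" using jb_le by simp
    hence "cm {(m - Suc t)*b + r<..(m - Suc t)*b + r + b} \<le> L" using P e by simp
    moreover have "N ((m - Suc t)*b + r + b) = N ((m - Suc t)*b + r) + cm {(m - Suc t)*b + r<..(m - Suc t)*b + r + b}"
      using N_split by simp
    ultimately show ?case using Suc e by simp
  qed simp
  show "\<forall>i\<in>{1..m+1}. cm (RR i) = L"
  proof
    fix i assume i: "i \<in> {1..m+1}"
    define j where "j = i - 1"
    have j: "j \<le> m" using i unfolding j_def by auto
    have "cm (RR i) = N (j*b + r) - N (j*b)" unfolding RR_def j_def[symmetric] by (rule cm_N) simp
    moreover have "N (j*b) \<le> j*L" using S1 j by simp
    moreover have "N n \<le> N (j*b + r) + (m-j)*L" using S2[of "m-j"] j nm by simp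
    moreover have "cm (RR i) \<le> L" unfolding RR_def j_def[symmetric] using P1[OF allpos, of "j*b" r] jb_le[OF j] r_lt_b by simp
    moreover have "(m+1)*L = j*L + L + (m-j)*L" using j by (simp add: algebra_simps)
    ultimately show "cm (RR i) = L" using NM by linarith
  qed
  show "\<forall>i\<in>{1..m}. cm (TT i) = 0"
  proof
    fix i assume i: "i \<in> {1..m}"
    define j where "j = i - 1"
    have j: "j < m" "i = j + 1" using i unfolding j_def by auto
    have "cm (TT i) = N (i*b) - N (j*b + r)" unfolding TT_def j_def[symmetric] using r_lt_b j
      by (intro cm_N) simp
    moreover have "N (i*b) \<le> i*L" using S1[of i] j by simp
    moreover have "N n \<le> N (j*b + r) + (m-j)*L" using S2[of "m-j"] j nm by simp
    moreover have "(m+1)*L = i*L + (m-j)*L" using j by (simp add: algebra_simps)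
    ultimately show "cm (TT i) = 0" using NM by linarith
  qed
qed

end


context setting begin
lemma locate:
  assumes x: "x \<in> {1..n}"
  shows "(\<exists>i\<in>{1..m+1}. x \<in> RR i) \<or> (\<exists>i\<in>{1..m}. x \<in> TT i)"
proof -
  define j where "j = (x - 1) div b"
  define \<rho> where "\<rho> = (x - 1) mod b"
  have e: "j*b + \<rho> = x - 1" unfolding j_def \<rho>_def by (rule div_mult_mod_eq)
  have rb: "\<rho> < b" unfolding \<rho>_def using r_lt_b by simp
  show ?thesis
  proof (cases "\<rho> < r")
    case True
    have "j \<le> m"
    proof (rule ccontr)
      assume "\<not> j \<le> m"
      hence "m + 1 \<le> j" by simp
      hence "(m+1)*b \<le> j*b" by (rule mult_le_mono1)
      moreover have "(m+1)*b = m*b + b" by simp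
      ultimately show False using e x nm r_lt_b by auto
    qed
    moreover have "x \<in> RR (j+1)" unfolding RR_def using e True x by auto
    ultimately show ?thesis by auto
  next
    case False
    have "j < m"
    proof (rule ccontr)
      assume "\<not> j < m"
      hence "m \<le> j" by simp
      hence "m*b \<le> j*b" by (rule mult_le_mono1)
      moreover have "1 \<le> x" "x \<le> n" using x by auto
      ultimately show False using e nm False by linarith
    qed
    moreover have "x \<in> TT (j+1)" unfolding TT_def using e False x rb by auto
    ultimately show ?thesis by auto
  qed
qed
end

context fsetting begin

lemma cm_le_card: "finite B \<Longrightarrow> cm B \<le> card B" by (intro card_mono) auto

lemma cross:
  assumes StrR: "\<forall>i\<in>{1..m+1}. cm (RR i) = L" and StrT: "\<forall>i\<in>{1..m}. \<forall>x\<in>TT i. f x = 1"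
    and gA: "good d k n A" and cA: "cm A \<ge> L + 1"
  shows "\<exists>i x y. 1 \<le> i \<and> i \<le> m \<and> x \<in> A \<and> y \<in> A \<and> f x = -1 \<and> f y = -1 \<and> x \<in> RR i \<and>
     (i-1)*b + r < y \<and> x < y \<and> (\<forall>z\<in>A. f z = -1 \<longrightarrow> (i-1)*b < z \<and> (z \<le> x \<or> y \<le> z)) \<and>
     (\<forall>z\<in>A. x < z \<and> z < y \<longrightarrow> f z \<noteq> -1)"
proof -
  have sub: "A \<subseteq> {1..n}" using gA unfolding good_def by simp
  have fin: "finite A" using sub finite_subset by blast
  let ?AM = "{z\<in>A. f z = -1}"
  have finM: "finite ?AM" using fin by simp
  have neM: "?AM \<noteq> {}"
  proof
    assume "?AM = {}"
    hence "cm A = 0" by (simp only: card.empty)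
    thus False using cA by simp
  qed
  define u where "u = Min ?AM"
  have uM: "u \<in> ?AM" unfolding u_def using finM neM by (rule Min_in)
  have umin: "\<And>z. z \<in> ?AM \<Longrightarrow> u \<le> z" unfolding u_def using finM by simp
  have u1: "u \<in> {1..n}" "f u = -1" using uM sub by auto
  have "\<not> (\<exists>i\<in>{1..m}. u \<in> TT i)" using StrT u1(2) by fastforce
  then obtain i where i: "i \<in> {1..m+1}" "u \<in> RR i"
    using locate[OF u1(1)] by blast
  have "card (?AM \<inter> RR i) \<le> cm (RR i)" by (intro card_mono) (auto simp: RR_def)
  hence "card (?AM \<inter> RR i) \<le> L" using StrR i by simp
  note cR = this
  have "?AM \<noteq> ?AM \<inter> RR i"
  proof
    assume h: "?AM = ?AM \<inter> RR i"
    have "card ?AM = card (?AM \<inter> RR i)" using h by (rule arg_cong)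
    thus False using cR cA by linarith
  qed
  then obtain v where v: "v \<in> ?AM" "v \<notin> RR i" by blast
  have "u \<le> v" using umin v by simp
  hence vgt: "(i-1)*b + r < v" using v i unfolding RR_def by auto
  have im: "i \<le> m"
  proof (rule ccontr)
    assume "\<not> i \<le> m"
    hence "i = m+1" using i by simp
    thus False using vgt v sub nm by auto
  qed
  define x where "x = Max (?AM \<inter> RR i)"
  have finMR: "finite (?AM \<inter> RR i)" by (rule finite_subset[OF _ finM]) auto
  have neMR: "?AM \<inter> RR i \<noteq> {}" using uM i by blast
  have xM: "x \<in> ?AM \<inter> RR i" unfolding x_def using finMR neMR by (rule Max_in)
  have xmax: "\<And>z. z \<in> ?AM \<inter> RR i \<Longrightarrow> z \<le> x" unfolding x_def using finMR by simp
  let ?Y = "{z\<in>?AM. (i-1)*b + r < z}"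
  define y where "y = Min ?Y"
  have finY: "finite ?Y" by (rule finite_subset[OF _ finM]) auto
  have neY: "?Y \<noteq> {}" using v vgt by blast
  have yY: "y \<in> ?Y" unfolding y_def using finY neY by (rule Min_in)
  have ymin: "\<And>z. z \<in> ?Y \<Longrightarrow> y \<le> z" unfolding y_def using finY by simp
  have xle: "x \<le> (i-1)*b + r" using xM unfolding RR_def by auto
  have lowb: "(i-1)*b < z" if "z \<in> ?AM" for z
  proof -
    have "u \<le> z" using umin that by simp
    moreover have "(i-1)*b < u" using i unfolding RR_def by auto
    ultimately show ?thesis by simp
  qed
  have dich: "z \<le> x \<or> y \<le> z" if "z \<in> ?AM" for z
  proof (cases "z \<le> (i-1)*b + r")
    case True
    hence "z \<in> RR i" using lowb[OF that] unfolding RR_def by auto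
    thus ?thesis using xmax that by auto
  next
    case False
    thus ?thesis using ymin that by auto
  qed
  have between: "f z \<noteq> -1" if "z \<in> A" "x < z" "z < y" for z
    using dich[of z] that by auto
  have xA: "x \<in> A" "f x = -1" "x \<in> RR i" using xM by auto
  have yA: "y \<in> A" "f y = -1" "(i-1)*b + r < y" using yY by auto
  have xy: "x < y" using xle yA(3) by simp
  have i1: "1 \<le> i" using i by simp
  have all: "\<forall>z\<in>A. f z = -1 \<longrightarrow> (i-1)*b < z \<and> (z \<le> x \<or> y \<le> z)" using lowb dich by blast
  have bet: "\<forall>z\<in>A. x < z \<and> z < y \<longrightarrow> f z \<noteq> -1" using between by blast
  show ?thesis using i1 im xA yA xy all bet by blast
qed

lemma cross_count:
  assumes gA: "good d k n A" and x: "x \<in> A" and y: "y \<in> A" and xy: "x < y"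
    and between: "\<forall>z\<in>A. x < z \<and> z < y \<longrightarrow> f z \<noteq> -1"
  shows "(y - x - 1) div d + cm A \<le> k"
proof -
  have sub: "A \<subseteq> {1..n}" and cA: "card A = k" and ch: "chain d A" using gA unfolding good_def by auto
  have fin: "finite A" using sub finite_subset by blast
  have "(y - x - 1) div d \<le> card (A \<inter> {x<..<y})" using chain_count[OF ch x y xy fin] d2 by simp
  also have "\<dots> \<le> card {z\<in>A. f z \<noteq> -1}" using between fin by (intro card_mono) auto
  finally have h: "(y - x - 1) div d \<le> card {z\<in>A. f z \<noteq> -1}" .
  have "card A = cm A + card {z\<in>A. f z \<noteq> -1}"
  proof -
    have "A = {z\<in>A. f z = -1} \<union> {z\<in>A. f z \<noteq> -1}" by auto
    moreover have "{z\<in>A. f z = -1} \<inter> {z\<in>A. f z \<noteq> -1} = {}" by auto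
    ultimately show ?thesis using fin by (metis (no_types, lifting) card_Un_disjoint finite_Un)
  qed
  thus ?thesis using h cA by simp
qed

lemma noBlock0:
  assumes StrR: "\<forall>i\<in>{1..m+1}. cm (RR i) = L" and StrT: "\<forall>i\<in>{1..m}. \<forall>x\<in>TT i. f x = 1"
    and s0: "s = 0" and gA: "good d k n A"
  shows "cm A \<le> L"
proof (rule ccontr)
  assume "\<not> cm A \<le> L"
  hence cA: "cm A \<ge> L + 1" by simp
  obtain i x y where c: "1 \<le> i" "i \<le> m" "x \<in> A" "y \<in> A" "f x = -1" "f y = -1" "x \<in> RR i"
     "(i-1)*b + r < y" "x < y" "\<forall>z\<in>A. x < z \<and> z < y \<longrightarrow> f z \<noteq> -1"
    using cross[OF StrR StrT gA cA] by blast
  have "y \<notin> TT i" using StrT c by auto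
  hence yb: "i*b < y" using c(8) unfolding TT_def by auto
  have xb: "x \<le> (i-1)*b + r" using c(7) unfolding RR_def by auto
  have ib: "i*b = (i-1)*b + b" using c(1) by (metis Suc_diff_1 add.commute less_le_trans mult_Suc zero_less_one)
  have "d*(K-s) \<le> y - x - 1" using yb xb b_r ib by linarith
  hence "(d*(K-s)) div d \<le> (y - x - 1) div d" by (rule div_le_mono)
  hence "K \<le> (y - x - 1) div d" using d2 s0 by simp
  thus False using cross_count[OF gA c(3) c(4) c(9) c(10)] cA kL KL by simp
qed

end


lemma block_interval:
  assumes "is_block B" "finite B" "B \<noteq> {}"
  shows "B = {Min B..Max B}"
proof
  show "B \<subseteq> {Min B..Max B}" using assms(2) by (simp add: subset_iff)
  show "{Min B..Max B} \<subseteq> B"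
  proof
    fix y assume y: "y \<in> {Min B..Max B}"
    have mm: "Min B \<in> B" "Max B \<in> B" using assms(2,3) by simp_all
    have "\<forall>x y z. x \<in> B \<longrightarrow> z \<in> B \<longrightarrow> x \<le> y \<longrightarrow> y \<le> z \<longrightarrow> y \<in> B"
      using assms(1) unfolding is_block_def .
    moreover have "Min B \<le> y" "y \<le> Max B" using y by auto
    ultimately show "y \<in> B" using mm by blast
  qed
qed

context fsetting begin

definition Rone :: "nat \<Rightarrow> nat set" where "Rone i = {x\<in>RR i. f x = 1}"
definition xR :: "nat \<Rightarrow> nat" where "xR i = Max {z\<in>RR i. f z = -1}"
definition yR :: "nat \<Rightarrow> nat" where "yR i = Min {z\<in>RR (i+1). f z = -1}"
definition Bt :: "nat \<Rightarrow> nat set" where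
  "Bt i = {x. (\<forall>y\<in>Rone i. \<forall>z\<in>Rone (i+1). y < x \<and> x < z) \<and> f x = -1}"
definition CT :: "nat \<Rightarrow> nat set" where "CT i = {xR i<..<yR i}"
definition BC :: "nat \<Rightarrow> bool" where
  "BC i \<longleftrightarrow> (\<not> is_block (Rone i) \<longrightarrow> card (CT i - TT i) \<ge> d) \<and>
     (is_block (Rone i) \<and> RR i \<inter> CT i = {} \<longrightarrow> is_block (Rone (i+1)) \<and> card (Bt i) \<le> L)"

lemma RR_sub: "i \<in> {1..m+1} \<Longrightarrow> RR i \<subseteq> {1..n}"
proof -
  assume i: "i \<in> {1..m+1}"
  hence "i - 1 \<le> m" by auto
  hence "(i-1)*b + r \<le> n" by (rule jb_le)
  thus ?thesis unfolding RR_def by auto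
qed

lemma TT_sub: "i \<in> {1..m} \<Longrightarrow> TT i \<subseteq> {1..n}"
proof -
  assume i: "i \<in> {1..m}"
  hence "i \<le> m" by simp
  hence "i*b \<le> m*b" by (rule mult_le_mono1)
  hence "i*b \<le> n" using nm by linarith
  thus ?thesis unfolding TT_def by auto
qed

lemma card_RR: "card (RR i) = r" unfolding RR_def by simp
lemma card_TT: "i \<ge> 1 \<Longrightarrow> card (TT i) = d*(K-s)"
proof -
  assume "i \<ge> 1"
  hence "i*b = (i-1)*b + b" by (metis Suc_diff_1 add.commute less_le_trans mult_Suc zero_less_one)
  thus ?thesis unfolding TT_def using b_r by simp
qed

lemma ib_eq: "i \<ge> 1 \<Longrightarrow> i*b = (i-1)*b + b" by (metis Suc_diff_1 add.commute less_le_trans mult_Suc zero_less_one)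

context
  assumes StrR: "\<forall>i\<in>{1..m+1}. cm (RR i) = L" and StrT: "\<forall>i\<in>{1..m}. \<forall>x\<in>TT i. f x = 1"
    and s_1: "s = 1"
begin

lemma card_Rone: "i \<in> {1..m+1} \<Longrightarrow> card (Rone i) = d"
proof -
  assume i: "i \<in> {1..m+1}"
  have "RR i = {z\<in>RR i. f z = -1} \<union> Rone i" using RR_sub[OF i] pm unfolding Rone_def by auto
  moreover have "{z\<in>RR i. f z = -1} \<inter> Rone i = {}" unfolding Rone_def by auto
  moreover have "finite {z\<in>RR i. f z = -1}" "finite (Rone i)" unfolding Rone_def RR_def by auto
  ultimately have "card (RR i) = cm (RR i) + card (Rone i)"
    by (metis card_Un_disjoint)
  thus ?thesis using StrR i card_RR rL s_1 by simp
qed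

lemma xR_props:
  assumes i: "i \<in> {1..m+1}"
  shows "xR i \<in> RR i" "f (xR i) = -1" "\<And>z. z \<in> RR i \<Longrightarrow> xR i < z \<Longrightarrow> f z = 1"
    "\<And>z. z \<in> RR i \<Longrightarrow> f z = -1 \<Longrightarrow> z \<le> xR i"
proof -
  let ?M = "{z\<in>RR i. f z = -1}"
  have fin: "finite ?M" unfolding RR_def by simp
  have ne: "?M \<noteq> {}"
  proof
    assume "?M = {}"
    hence "cm (RR i) = 0" by (simp only: card.empty)
    thus False using StrR i L2 by simp
  qed
  have "xR i \<in> ?M" unfolding xR_def using fin ne by (rule Max_in)
  thus "xR i \<in> RR i" "f (xR i) = -1" by auto
  show "\<And>z. z \<in> RR i \<Longrightarrow> f z = -1 \<Longrightarrow> z \<le> xR i" unfolding xR_def using fin by simp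
  fix z assume z: "z \<in> RR i" "xR i < z"
  have "f z \<noteq> -1"
  proof
    assume "f z = -1"
    hence "z \<in> ?M" using z by simp
    hence "z \<le> xR i" unfolding xR_def using fin by simp
    thus False using z by simp
  qed
  thus "f z = 1" using pm RR_sub[OF i] z by auto
qed

lemma yR_props:
  assumes i: "i \<in> {1..m}"
  shows "yR i \<in> RR (i+1)" "f (yR i) = -1" "\<And>z. z \<in> RR (i+1) \<Longrightarrow> z < yR i \<Longrightarrow> f z = 1"
    "\<And>z. z \<in> RR (i+1) \<Longrightarrow> f z = -1 \<Longrightarrow> yR i \<le> z"
proof -
  let ?M = "{z\<in>RR (i+1). f z = -1}"
  have i1: "i+1 \<in> {1..m+1}" using i by simp
  have fin: "finite ?M" unfolding RR_def by simp
  have ne: "?M \<noteq> {}"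
  proof
    assume "?M = {}"
    hence "cm (RR (i+1)) = 0" by (simp only: card.empty)
    thus False using StrR i1 L2 by simp
  qed
  have "yR i \<in> ?M" unfolding yR_def using fin ne by (rule Min_in)
  thus "yR i \<in> RR (i+1)" "f (yR i) = -1" by auto
  show "\<And>z. z \<in> RR (i+1) \<Longrightarrow> f z = -1 \<Longrightarrow> yR i \<le> z" unfolding yR_def using fin by simp
  fix z assume z: "z \<in> RR (i+1)" "z < yR i"
  have "f z \<noteq> -1"
  proof
    assume "f z = -1"
    hence "z \<in> ?M" using z by simp
    hence "yR i \<le> z" unfolding yR_def using fin by simp
    thus False using z by simp
  qed
  thus "f z = 1" using pm RR_sub[OF i1] z by auto
qed

end
end


lemma aux_sub: "(a::nat) \<le> c \<Longrightarrow> c < P + q \<Longrightarrow> 0 < q \<Longrightarrow> a - P < q" by linarith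

context fsetting begin

lemma cross_count2:
  assumes gA: "good d k n A" and x: "x \<in> A" and y: "y \<in> A" and xy: "x < y"
    and between: "\<forall>z\<in>A. x < z \<and> z < y \<longrightarrow> f z \<noteq> -1"
    and w: "w \<in> A" "f w \<noteq> -1" "w \<notin> {x<..<y}"
  shows "(y - x - 1) div d + 1 + cm A \<le> k"
proof -
  have sub: "A \<subseteq> {1..n}" and cA: "card A = k" and ch: "chain d A" using gA unfolding good_def by auto
  have fin: "finite A" using sub finite_subset by blast
  have "(y - x - 1) div d + 1 \<le> card (A \<inter> {x<..<y}) + 1" using chain_count[OF ch x y xy fin] d2 by simp
  also have "\<dots> = card (insert w (A \<inter> {x<..<y}))" using w fin by simp
  also have "\<dots> \<le> card {z\<in>A. f z \<noteq> -1}" using between fin w by (intro card_mono) auto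
  finally have h: "(y - x - 1) div d + 1 \<le> card {z\<in>A. f z \<noteq> -1}" .
  have "A = {z\<in>A. f z = -1} \<union> {z\<in>A. f z \<noteq> -1}" by auto
  moreover have "{z\<in>A. f z = -1} \<inter> {z\<in>A. f z \<noteq> -1} = {}" by auto
  moreover have "finite {z\<in>A. f z = -1}" "finite {z\<in>A. f z \<noteq> -1}" using fin by auto
  ultimately have "card A = cm A + card {z\<in>A. f z \<noteq> -1}" by (metis card_Un_disjoint)
  thus ?thesis using h cA by simp
qed

lemma dK: "d*K = d*(K-1) + d"
proof -
  have "K = (K - 1) + 1" using KL by simp
  hence "d*K = d*((K-1)+1)" by simp
  thus ?thesis by (simp add: algebra_simps)
qed

lemma divK: "d*K \<le> z \<Longrightarrow> K \<le> z div d"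
proof -
  assume "d*K \<le> z"
  hence "(d*K) div d \<le> z div d" by (rule div_le_mono)
  thus ?thesis using d2 by simp
qed

lemma divK1: "d*(K-1) \<le> z \<Longrightarrow> K - 1 \<le> z div d"
proof -
  assume "d*(K-1) \<le> z"
  hence "(d*(K-1)) div d \<le> z div d" by (rule div_le_mono)
  thus ?thesis using d2 by simp
qed

context
  assumes StrR: "\<forall>i\<in>{1..m+1}. cm (RR i) = L" and StrT: "\<forall>i\<in>{1..m}. \<forall>x\<in>TT i. f x = 1"
    and s_1: "s = 1"
begin

lemma Rone_block:
  assumes i: "i \<in> {1..m+1}" and bl: "is_block (Rone i)"
  shows "Rone i = {Min (Rone i)..Max (Rone i)}" "Max (Rone i) = Min (Rone i) + d - 1"
    "Rone i \<subseteq> RR i" "Min (Rone i) \<in> Rone i" "Max (Rone i) \<in> Rone i"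
proof -
  have fin: "finite (Rone i)" unfolding Rone_def RR_def by simp
  have cd: "card (Rone i) = d" using card_Rone[OF StrR StrT s_1 i] .
  hence ne: "Rone i \<noteq> {}" using d2 by auto
  show e: "Rone i = {Min (Rone i)..Max (Rone i)}" by (rule block_interval[OF bl fin ne])
  have "card {Min (Rone i)..Max (Rone i)} = d" using cd e by simp
  moreover have "Min (Rone i) \<le> Max (Rone i)" using fin ne by simp
  ultimately show "Max (Rone i) = Min (Rone i) + d - 1" by simp
  show "Rone i \<subseteq> RR i" unfolding Rone_def by auto
  show "Min (Rone i) \<in> Rone i" "Max (Rone i) \<in> Rone i" using fin ne by simp_all
qed

lemma noBlock1:
  assumes BCall: "\<forall>i\<in>{1..m}. BC i" and gA: "good d k n A"
  shows "cm A \<le> L"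
proof (rule ccontr)
  assume "\<not> cm A \<le> L"
  hence cA: "cm A \<ge> L + 1" by simp
  obtain i x y where c: "1 \<le> i" "i \<le> m" "x \<in> A" "y \<in> A" "f x = -1" "f y = -1" "x \<in> RR i"
     "(i-1)*b + r < y" "x < y" "\<forall>z\<in>A. f z = -1 \<longrightarrow> (i-1)*b < z \<and> (z \<le> x \<or> y \<le> z)"
     "\<forall>z\<in>A. x < z \<and> z < y \<longrightarrow> f z \<noteq> -1"
    using cross[OF StrR StrT gA cA] by blast
  have im: "i \<in> {1..m}" "i \<in> {1..m+1}" "i+1 \<in> {1..m+1}" using c by auto
  define E where "E = (i-1)*b + r"
  have ibE: "i*b = E + d*(K-1)" unfolding E_def using ib_eq[OF c(1)] b_r s_1 by simp
  have xE: "(i-1)*b < x" "x \<le> E" using c(7) unfolding RR_def E_def by auto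
  have "y \<notin> TT i" using StrT c im by auto
  hence yib: "i*b < y" using c(8) unfolding TT_def by auto
  have "(y - x - 1) div d + cm A \<le> k" using cross_count[OF gA c(3) c(4) c(9) c(11)] .
  hence dv: "(y - x - 1) div d \<le> K - 1" using cA kL KL by simp
  have lt: "y - x - 1 < d*K"
  proof (rule ccontr)
    assume "\<not> y - x - 1 < d*K"
    hence "K \<le> (y - x - 1) div d" using divK by simp
    thus False using dv KL by simp
  qed
  have ge: "d*(K-1) \<le> y - x - 1" using ibE yib xE by linarith
  have extra: False if w: "w \<in> A" "f w = 1" "w \<notin> {x<..<y}" for w
  proof -
    have "(y - x - 1) div d + 1 + cm A \<le> k" using cross_count2[OF gA c(3) c(4) c(9) c(11) w(1)] w by simp
    moreover have "K - 1 \<le> (y - x - 1) div d" using divK1[OF ge] .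
    ultimately show False using cA kL KL by simp
  qed
  have yR1: "y \<le> i*b + r"
  proof (rule ccontr)
    assume "\<not> y \<le> i*b + r"
    hence "d*K \<le> y - x - 1" using ibE xE rL s_1 by (simp add: algebra_simps)
    thus False using lt by simp
  qed
  have yRR: "y \<in> RR (i+1)" unfolding RR_def using yib yR1 by simp
  note xp = xR_props[OF StrR StrT s_1 im(2)]
  note yp = yR_props[OF StrR StrT s_1 im(1)]
  have xxR: "x \<le> xR i" using xp(4) c(7) c(5) by simp
  have yyR: "yR i \<le> y" using yp(4) yRR c(6) by simp
  have xRE: "xR i \<le> E" using xp(1) unfolding RR_def E_def by auto
  have yRb: "i*b < yR i" using yp(1) unfolding RR_def by auto
  have TCT: "TT i \<subseteq> CT i" unfolding TT_def CT_def using xRE yRb E_def by auto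
  have "finite (TT i)" unfolding TT_def by simp
  hence "card (CT i - TT i) = card (CT i) - card (TT i)" using TCT by (rule card_Diff_subset)
  hence "card (CT i - TT i) = (yR i - xR i - 1) - d*(K-1)" unfolding CT_def using card_TT[OF c(1)] s_1 by simp
  moreover have "yR i - xR i - 1 \<le> y - x - 1" using xxR yyR by simp
  moreover have "y - x - 1 < d*(K-1) + d" using lt dK by simp
  moreover have "0 < d" using d2 by simp
  ultimately have "card (CT i - TT i) < d" using aux_sub by metis
  hence bl: "is_block (Rone i)" using BCall im unfolding BC_def by auto
  note rb = Rone_block[OF im(2) bl]
  obtain \<rho> \<mu> where rm: "\<rho> = Min (Rone i)" "\<mu> = Max (Rone i)" by blast
  have rmem: "z \<in> Rone i \<longleftrightarrow> \<rho> \<le> z \<and> z \<le> \<mu>" for z using rb(1) rm by (metis atLeastAtMost_iff)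
  have rmu: "\<mu> = \<rho> + d - 1" "\<rho> \<in> Rone i" "\<mu> \<in> Rone i" using rb rm by auto
  have rle: "\<rho> \<le> \<mu>" using rmu(2) rmem by blast
  have RoneE: "z \<le> E" "(i-1)*b < z" if "z \<in> Rone i" for z using that rb(3) unfolding RR_def E_def by auto
  have xmu: "\<mu> < x"
  proof (rule ccontr)
    assume "\<not> \<mu> < x"
    moreover have "x \<notin> Rone i" using c(5) unfolding Rone_def by simp
    ultimately have "x < \<rho>" using rmem by auto
    hence "Rone i \<subseteq> {x<..E}" using RoneE rmem by auto
    hence "d \<le> E - x" using card_Rone[OF StrR StrT s_1 im(2)] card_mono[of "{x<..E}" "Rone i"] by simp
    hence "d*K \<le> y - x - 1" using ibE yib xE KL by (simp add: algebra_simps; linarith)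
    thus False using lt by simp
  qed
  have xRE2: "xR i = E"
  proof (rule ccontr)
    assume "xR i \<noteq> E"
    hence "xR i < E" using xRE by simp
    moreover have "E \<in> RR i" unfolding RR_def E_def using r_lt_b L2 rL by auto
    ultimately have "f E = 1" using xp(3) by simp
    hence "E \<in> Rone i" using \<open>E \<in> RR i\<close> unfolding Rone_def by simp
    hence "E \<le> \<mu>" using rmem by simp
    thus False using xmu xxR \<open>xR i < E\<close> by simp
  qed
  have "RR i \<inter> CT i = {}" unfolding CT_def RR_def using xRE2 E_def by auto
  hence bl2: "is_block (Rone (i+1))" and cBt: "card (Bt i) \<le> L" using BCall im bl unfolding BC_def by auto
  note rb2 = Rone_block[OF im(3) bl2]
  obtain \<rho>' \<mu>' where rm2: "\<rho>' = Min (Rone (i+1))" "\<mu>' = Max (Rone (i+1))" by blast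
  have rmem2: "z \<in> Rone (i+1) \<longleftrightarrow> \<rho>' \<le> z \<and> z \<le> \<mu>'" for z using rb2(1) rm2 by (metis atLeastAtMost_iff)
  have rmu2: "\<mu>' = \<rho>' + d - 1" "\<rho>' \<in> Rone (i+1)" "\<mu>' \<in> Rone (i+1)" using rb2 rm2 by auto
  have Rone2: "i*b < z" if "z \<in> Rone (i+1)" for z using that rb2(3) unfolding RR_def by auto
  have yrho: "y < \<rho>'"
  proof (rule ccontr)
    assume "\<not> y < \<rho>'"
    moreover have "y \<notin> Rone (i+1)" using c(6) unfolding Rone_def by simp
    ultimately have "\<mu>' < y" using rmem2 by auto
    hence "Rone (i+1) \<subseteq> {i*b<..<y}" using Rone2 rmem2 by auto
    hence "d \<le> y - i*b - 1" using card_Rone[OF StrR StrT s_1 im(3)] card_mono[of "{i*b<..<y}" "Rone (i+1)"] by simp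
    hence "d*K \<le> y - x - 1" using ibE yib xE KL by (simp add: algebra_simps; linarith)
    thus False using lt by simp
  qed
  have ch: "chain d A" using gA unfolding good_def by simp
  have "{z\<in>A. f z = -1} \<subseteq> Bt i"
  proof
    fix z assume z: "z \<in> {z\<in>A. f z = -1}"
    have zA: "z \<in> A" "f z = -1" using z by auto
    have "(i-1)*b < z \<and> (z \<le> x \<or> y \<le> z)" using c(10) zA by blast
    hence "z \<le> x \<or> y \<le> z" by simp
    thus "z \<in> Bt i"
    proof
      assume zx: "z \<le> x"
      have "\<mu> < z"
      proof (rule ccontr)
        assume "\<not> \<mu> < z"
        moreover have "z \<notin> Rone i" using zA unfolding Rone_def by simp
        ultimately have "z < \<rho>" using rmem by auto
        hence "z \<le> \<rho> - 1" "\<rho> - 1 < x" using xmu rle by auto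
        then obtain w where w: "w \<in> A" "\<rho> - 1 < w" "w \<le> \<rho> - 1 + d" using chainD[OF ch zA(1) c(3)] by blast
        have "\<rho> \<ge> 1" using rmu(2) RoneE by fastforce
        hence "w \<in> Rone i" using w rmem rmu(1) d2 by auto
        hence "f w = 1" unfolding Rone_def by simp
        moreover have "w \<notin> {x<..<y}" using w rmu(1) xmu \<open>\<rho> \<ge> 1\<close> d2 by auto
        ultimately show False using extra w(1) by blast
      qed
      moreover have "z \<le> E" using zx xE by simp
      ultimately show "z \<in> Bt i" unfolding Bt_def using zA rmem Rone2 ibE by fastforce
    next
      assume yz: "y \<le> z"
      have "z < \<rho>'"
      proof (rule ccontr)
        assume nz: "\<not> z < \<rho>'"
        moreover have "z \<notin> Rone (i+1)" using zA unfolding Rone_def by simp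
        ultimately have "\<mu>' < z" using rmem2 by auto
        have "y \<le> \<rho>' - 1" "\<rho>' - 1 < z" using yrho nz by auto
        then obtain w where w: "w \<in> A" "\<rho>' - 1 < w" "w \<le> \<rho>' - 1 + d" using chainD[OF ch c(4) zA(1)] by blast
        have "\<rho>' \<ge> 1" using rmu2(2) Rone2 by fastforce
        hence "w \<in> Rone (i+1)" using w rmem2 rmu2(1) d2 by auto
        hence "f w = 1" unfolding Rone_def by simp
        moreover have "w \<notin> {x<..<y}" using w yrho by auto
        ultimately show False using extra w(1) by blast
      qed
      moreover have "\<forall>p\<in>Rone i. p < z" using RoneE yz c(8) E_def by fastforce
      ultimately show "z \<in> Bt i" unfolding Bt_def using zA rmem2 by fastforce
    qed
  qed
  moreover have "finite (Bt i)"
  proof (rule finite_subset[of _ "{..<\<rho>'}"])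
    show "Bt i \<subseteq> {..<\<rho>'}" unfolding Bt_def using rmu2(2) rmu(2) by auto
  qed simp
  ultimately have "cm A \<le> card (Bt i)" using card_mono by blast
  thus False using cBt cA by simp
qed

end
end


lemma is_block_interval: "is_block {a<..(b::nat)}" unfolding is_block_def by auto

context fsetting begin

lemma mkbad:
  assumes allpos: "\<And>A. good d k n A \<Longrightarrow> cm A \<le> L"
    and S: "S \<subseteq> {1..n}" "S \<noteq> {}" "chain d S" "card S \<le> k" "cm S \<ge> L + 1"
  shows False
proof -
  have "k \<le> n" using n2k by simp
  then obtain A where A: "S \<subseteq> A" "good d k n A" using pad[OF S(3) S(1) S(2) S(4)] d2 by auto
  have finA: "finite A" using A(2) unfolding good_def using finite_subset by blast
  have "{z\<in>S. f z = -1} \<subseteq> {z\<in>A. f z = -1}" using A(1) by auto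
  hence "cm S \<le> cm A" using finA by (intro card_mono) auto
  thus False using allpos[OF A(2)] S(5) by simp
qed

context
  assumes StrR: "\<forall>i\<in>{1..m+1}. cm (RR i) = L" and StrT: "\<forall>i\<in>{1..m}. \<forall>x\<in>TT i. f x = 1"
    and s_1: "s = 1"
begin

lemma chainX:
  assumes i: "i \<in> {1..m+1}" and nb: "\<not> is_block (Rone i)"
  shows "chain d {z\<in>RR i. f z = -1}"
  unfolding chain_def
proof (intro ballI allI impI)
  let ?X = "{z\<in>RR i. f z = -1}"
  fix u v p assume u: "u \<in> ?X" and v: "v \<in> ?X" and p: "u \<le> p \<and> p < v"
  show "\<exists>z\<in>?X. p < z \<and> z \<le> p + d"
  proof (cases "v \<le> p + d")
    case True thus ?thesis using v p by blast
  next
    case False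
    show ?thesis
    proof (rule ccontr)
      assume no: "\<not> ?thesis"
      have DR: "{p<..p+d} \<subseteq> RR i" using u v p False unfolding RR_def by auto
      have "{p<..p+d} \<subseteq> Rone i"
      proof
        fix z assume z: "z \<in> {p<..p+d}"
        hence "z \<in> RR i" using DR by auto
        moreover have "f z \<noteq> -1" using no z \<open>z \<in> RR i\<close> by auto
        ultimately show "z \<in> Rone i" using pm RR_sub[OF i] unfolding Rone_def by auto
      qed
      moreover have "finite (Rone i)" unfolding Rone_def RR_def by simp
      moreover have "card {p<..p+d} = card (Rone i)" using card_Rone[OF StrR StrT s_1 i] by simp
      ultimately have "{p<..p+d} = Rone i" using card_subset_eq by metis
      thus False using nb is_block_interval by metis
    qed
  qed
qed

lemma CT_card:
  assumes i: "i \<in> {1..m}"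
  shows "card (CT i - TT i) + d*(K-1) = yR i - xR i - 1" "d*(K-1) \<le> yR i - xR i - 1"
    "i*b = (i-1)*b + r + d*(K-1)" "xR i \<le> (i-1)*b + r" "i*b < yR i"
proof -
  have im: "i \<in> {1..m+1}" using i by simp
  note xp = xR_props[OF StrR StrT s_1 im]
  note yp = yR_props[OF StrR StrT s_1 i]
  show xRE: "xR i \<le> (i-1)*b + r" using xp(1) unfolding RR_def by auto
  show yRb: "i*b < yR i" using yp(1) unfolding RR_def by auto
  have i1: "1 \<le> i" using i by simp
  show ibE: "i*b = (i-1)*b + r + d*(K-1)" using ib_eq[OF i1] b_r s_1 by simp
  have TCT: "TT i \<subseteq> CT i" unfolding TT_def CT_def using xRE yRb by auto
  have "finite (TT i)" unfolding TT_def by simp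
  hence "card (CT i - TT i) = card (CT i) - card (TT i)" using TCT by (rule card_Diff_subset)
  moreover have "card (TT i) \<le> card (CT i)" using TCT by (intro card_mono) (auto simp: CT_def)
  ultimately show "card (CT i - TT i) + d*(K-1) = yR i - xR i - 1"
    unfolding CT_def using card_TT[OF i1] s_1 by simp
  thus "d*(K-1) \<le> yR i - xR i - 1" by linarith
qed

lemma BC_A:
  assumes allpos: "\<And>A. good d k n A \<Longrightarrow> cm A \<le> L" and i: "i \<in> {1..m}"
  shows "BC i"
proof -
  have im: "i \<in> {1..m+1}" "i+1 \<in> {1..m+1}" using i by auto
  note xp = xR_props[OF StrR StrT s_1 im(1)]
  note yp = yR_props[OF StrR StrT s_1 i]
  note ct = CT_card[OF i]
  define E where "E = (i-1)*b + r"
  have d1: "d \<ge> 1" using d2 by simp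
  have KK: "K - 1 + 1 = K" using KL by simp
  have kk: "L + (K-1) + 1 = k" using kL KL by simp
  have xyR: "xR i < yR i" using ct(3) ct(4) ct(5) by linarith
  have yRn: "yR i \<in> {1..n}" using yp(1) RR_sub[OF im(2)] by auto
  have xRn: "xR i \<in> {1..n}" using xp(1) RR_sub[OF im(1)] by auto
  have bridge: False if X: "chain d X" "xx \<in> X" "\<forall>w\<in>X. w \<le> xx" "X \<subseteq> {1..n}"
     and Y: "chain d Y" "yy \<in> Y" "\<forall>w\<in>Y. yy \<le> w" "Y \<subseteq> {1..n}"
     and xy: "xx + d*(K-1) < yy" "yy \<le> xx + d*K"
     and cX: "card X + card Y \<le> L + 1" and mX: "cm (X \<union> Y) \<ge> L + 1" for X Y xx yy
  proof -
    let ?P = "{xx + j*d | j. 1 \<le> j \<and> j \<le> K-1}"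
    have xy': "xx + (K-1)*d < yy" "yy \<le> xx + (K-1+1)*d" using xy KK by (simp_all add: mult.commute)
    have ch: "chain d (X \<union> ?P \<union> Y)" by (rule chain_prog[OF X(1-3) Y(1-3) xy' d1])
    have Pb: "xx < w \<and> w < yy" if "w \<in> ?P" for w using prog_bounds[OF that d1] xy(1) by (simp add: mult.commute; linarith)
    have "?P \<subseteq> {1..n}"
    proof
      fix w assume "w \<in> ?P"
      hence "xx < w" "w < yy" using Pb by auto
      moreover have "yy \<le> n" using Y(2,4) by auto
      ultimately show "w \<in> {1..n}" by simp
    qed
    hence sub: "X \<union> ?P \<union> Y \<subseteq> {1..n}" using X(4) Y(4) by auto
    have "card (X \<union> ?P \<union> Y) \<le> card X + card ?P + card Y"
      by (meson add_le_mono card_Un_le le_trans order_refl)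
    hence cS: "card (X \<union> ?P \<union> Y) \<le> k" using card_prog[of xx d "K-1"] cX kk by linarith
    have finS: "finite (X \<union> ?P \<union> Y)" using sub finite_subset by blast
    have "cm (X \<union> Y) \<le> cm (X \<union> ?P \<union> Y)" using finS by (intro card_mono) auto
    thus False using mkbad[OF allpos sub _ ch cS] mX X(2) by auto
  qed
  have part3: "card (CT i - TT i) \<ge> d" if nb: "\<not> is_block (Rone i)"
  proof (rule ccontr)
    assume "\<not> card (CT i - TT i) \<ge> d"
    hence lt: "yR i \<le> xR i + d*K" using ct(1) ct(2) dK xyR by linarith
    have gt: "xR i + d*(K-1) < yR i" using ct(2) xyR by linarith
    let ?X = "{z\<in>RR i. f z = -1}"
    have cX: "card ?X = L" using StrR im by simp
    have "yR i \<notin> ?X" using yp(1) ct(3) ct(5) unfolding RR_def by auto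
    moreover have "{z\<in>?X \<union> {yR i}. f z = -1} = insert (yR i) ?X" using yp(2) by auto
    moreover have "finite ?X" unfolding RR_def by simp
    ultimately have mm: "cm (?X \<union> {yR i}) \<ge> L + 1" using cX by simp
    have cc: "card ?X + card {yR i} \<le> L + 1" using cX by simp
    have p: "xR i \<in> ?X" "\<forall>w\<in>?X. w \<le> xR i" "?X \<subseteq> {1..n}"
      "yR i \<in> {yR i}" "\<forall>w\<in>{yR i}. yR i \<le> w" "{yR i} \<subseteq> {1..n}"
      using yRn xp(1,2,4) RR_sub[OF im(1)] by auto
    show False by (rule bridge[OF chainX[OF im(1) nb] p(1-3) chain_single p(4-6) gt lt cc mm])
  qed
  have part4: "is_block (Rone (i+1)) \<and> card (Bt i) \<le> L" if bl: "is_block (Rone i)" and disj: "RR i \<inter> CT i = {}"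
  proof -
    have xRE: "xR i = E"
    proof (rule ccontr)
      assume "xR i \<noteq> E"
      hence "xR i < E" using ct(4) E_def by simp
      moreover have "E < yR i" using ct(3) ct(5) E_def by simp
      moreover have "E \<in> RR i" unfolding RR_def E_def using L2 rL by auto
      ultimately show False using disj unfolding CT_def by auto
    qed
    have bl2: "is_block (Rone (i+1))"
    proof (cases "yR i - xR i - 1 \<ge> d*K")
      case True
      hence "d \<le> yR i - i*b - 1" using xRE E_def ct(3) dK by linarith
      hence DR: "{i*b<..i*b+d} \<subseteq> RR (i+1)" "\<forall>z\<in>{i*b<..i*b+d}. z < yR i"
        unfolding RR_def using rL s_1 by auto
      have "{i*b<..i*b+d} \<subseteq> Rone (i+1)"
      proof
        fix z assume z: "z \<in> {i*b<..i*b+d}"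
        hence "z \<in> RR (i+1)" "z < yR i" using DR by auto
        thus "z \<in> Rone (i+1)" using yp(3) unfolding Rone_def by auto
      qed
      moreover have "finite (Rone (i+1))" unfolding Rone_def RR_def by simp
      moreover have "card {i*b<..i*b+d} = card (Rone (i+1))" using card_Rone[OF StrR StrT s_1 im(2)] by simp
      ultimately have "{i*b<..i*b+d} = Rone (i+1)" using card_subset_eq by metis
      thus ?thesis using is_block_interval by metis
    next
      case False
      show ?thesis
      proof (rule ccontr)
        assume nb2: "\<not> is_block (Rone (i+1))"
        have lt: "yR i \<le> xR i + d*K" using False xyR by linarith
        have gt: "xR i + d*(K-1) < yR i" using ct(2) xyR by linarith
        let ?Y = "{z\<in>RR (i+1). f z = -1}"
        have cY: "card ?Y = L" using StrR im by simp
        have "xR i \<notin> ?Y" using xp(1) ct(3) ct(4) unfolding RR_def by auto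
        moreover have "{z\<in>{xR i} \<union> ?Y. f z = -1} = insert (xR i) ?Y" using xp(2) by auto
        moreover have "finite ?Y" unfolding RR_def by simp
        ultimately have mm: "cm ({xR i} \<union> ?Y) \<ge> L + 1" using cY by simp
        have cc: "card {xR i} + card ?Y \<le> L + 1" using cY by simp
        have p: "xR i \<in> {xR i}" "\<forall>w\<in>{xR i}. w \<le> xR i" "{xR i} \<subseteq> {1..n}"
          "yR i \<in> ?Y" "\<forall>w\<in>?Y. yR i \<le> w" "?Y \<subseteq> {1..n}"
          using xRn yp(1,2,4) RR_sub[OF im(2)] by auto
        show False by (rule bridge[OF chain_single p(1-3) chainX[OF im(2) nb2] p(4-6) gt lt cc mm])
      qed
    qed
    note rb = Rone_block[OF StrR StrT s_1 im(1) bl]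
    note rb2 = Rone_block[OF StrR StrT s_1 im(2) bl2]
    obtain \<mu> \<nu> where mn: "\<mu> = Max (Rone i)" "\<nu> = Min (Rone (i+1))" by blast
    have finR: "finite (Rone i)" "finite (Rone (i+1))" unfolding Rone_def RR_def by simp_all
    have mu: "\<mu> \<in> Rone i" "\<And>z. z \<in> Rone i \<Longrightarrow> z \<le> \<mu>"
      using rb(5) mn(1) finR(1) by (simp_all add: Max_ge)
    have nu: "\<nu> \<in> Rone (i+1)" "\<And>z. z \<in> Rone (i+1) \<Longrightarrow> \<nu> \<le> z"
      using rb2(4) mn(2) finR(2) by (simp_all add: Min_le)
    have muRR: "\<mu> \<in> RR i" "f \<mu> = 1" using mu(1) unfolding Rone_def by auto
    have "\<mu> \<noteq> E" using muRR(2) xp(2) xRE by auto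
    hence muR: "(i-1)*b < \<mu>" "\<mu> < E" using muRR(1) unfolding RR_def E_def by auto
    have nuR: "i*b < \<nu>" "\<nu> \<le> i*b + r" using nu(1) rb2(3) unfolding RR_def by auto
    let ?X' = "{\<mu><..E}" and ?Y' = "{i*b<..<\<nu>}"
    have X'm: "z \<in> RR i \<and> f z = -1" if "z \<in> ?X'" for z
    proof -
      have "z \<in> RR i" using that muR unfolding RR_def E_def by auto
      moreover have "f z \<noteq> 1" using mu(2)[of z] that \<open>z \<in> RR i\<close> unfolding Rone_def by auto
      ultimately show ?thesis using pm RR_sub[OF im(1)] by auto
    qed
    have Y'm: "z \<in> RR (i+1) \<and> f z = -1" if "z \<in> ?Y'" for z
    proof -
      have "z \<in> RR (i+1)" using that nuR unfolding RR_def by auto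
      moreover have "f z \<noteq> 1" using nu(2)[of z] that \<open>z \<in> RR (i+1)\<close> unfolding Rone_def by auto
      ultimately show ?thesis using pm RR_sub[OF im(2)] by auto
    qed
    have cX': "card ?X' \<le> L"
    proof -
      have "card ?X' \<le> cm (RR i)" using X'm by (intro card_mono) (auto simp: RR_def)
      thus ?thesis using StrR im by simp
    qed
    have Btsub: "Bt i \<subseteq> ?X' \<union> ?Y'"
    proof
      fix z assume z: "z \<in> Bt i"
      have z1: "\<mu> < z" "z < \<nu>" "f z = -1" using z mu(1) nu(1) unfolding Bt_def by blast+
      have "z \<notin> TT i" using StrT i z1(3) by auto
      hence "z \<le> E \<or> i*b < z" unfolding TT_def E_def by auto
      thus "z \<in> ?X' \<union> ?Y'" using z1 by auto
    qed
    have "card (Bt i) \<le> L"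
    proof (rule ccontr)
      assume big: "\<not> card (Bt i) \<le> L"
      have "card (Bt i) \<le> card (?X' \<union> ?Y')" using Btsub by (intro card_mono) auto
      also have "\<dots> \<le> card ?X' + card ?Y'" by (rule card_Un_le)
      finally have cc: "card ?X' + card ?Y' \<ge> L + 1" using big by simp
      define v where "v = L + 1 - card ?X'"
      have v: "v \<ge> 1" "v \<le> card ?Y'" "card ?X' + v = L + 1" using cc cX' unfolding v_def by auto
      let ?Y'' = "{i*b<..i*b+v}"
      have Y''sub: "?Y'' \<subseteq> ?Y'" using v by auto
      have xE: "E \<in> ?X'" using muR by simp
      have Xn: "?X' \<subseteq> {1..n}" using X'm RR_sub[OF im(1)] by blast
      have Yn: "?Y'' \<subseteq> {1..n}" using Y''sub Y'm RR_sub[OF im(2)] by blast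
      have chX: "chain d ?X'"
      proof -
        have "?X' = {Suc \<mu>..E}" by auto
        thus ?thesis using chain_interval[OF d1] by metis
      qed
      have chY: "chain d ?Y''"
      proof -
        have "?Y'' = {Suc (i*b)..i*b+v}" by auto
        thus ?thesis using chain_interval[OF d1] by metis
      qed
      have "?X' \<inter> ?Y'' = {}" using ct(3) E_def by auto
      moreover have "?X' \<union> ?Y'' \<subseteq> {z. f z = -1}" using X'm Y''sub Y'm by blast
      ultimately have "{z\<in>?X' \<union> ?Y''. f z = -1} = ?X' \<union> ?Y''" "card (?X' \<union> ?Y'') = card ?X' + card ?Y''"
        by (blast, intro card_Un_disjoint) simp_all
      hence mm: "cm (?X' \<union> ?Y'') \<ge> L + 1" using v by simp
      have cc: "card ?X' + card ?Y'' \<le> L + 1" using v by simp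
      have gl: "E + d*(K-1) < Suc (i*b)" "Suc (i*b) \<le> E + d*K" using ct(3) E_def dK d2 by simp_all
      have p: "\<forall>w\<in>?X'. w \<le> E" "Suc (i*b) \<in> ?Y''" "\<forall>w\<in>?Y''. Suc (i*b) \<le> w" using v by auto
      show False by (rule bridge[OF chX xE p(1) Xn chY p(2) p(3) Yn gl cc mm])
    qed
    thus ?thesis using bl2 by simp
  qed
  show ?thesis unfolding BC_def using part3 part4 by blast
qed

end
end


locale fset2 = fsetting +
  assumes mdef: "pm_m k s = m" and bdef: "pm_b d k = b" and rdef: "pm_r d k s = r"
begin

lemma Rset: "R_set d k s i = RR i" unfolding R_set_def RR_def rdef bdef by auto
lemma Tset: "T_set d k s i = TT i"
proof -
  have "k div 2 + d*s = r + 1" using kL rL by simp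
  thus ?thesis unfolding T_set_def TT_def bdef by auto
qed
lemma Ronedef: "R_one d k s f i = Rone i" unfolding R_one_def Rone_def Rset ..

lemma all_minus_iff: "finite X \<Longrightarrow> cm X = card X \<longleftrightarrow> (\<forall>x\<in>X. f x = -1)"
proof
  assume fin: "finite X" and c: "cm X = card X"
  have "{x\<in>X. f x = -1} = X" using card_subset_eq[OF fin _ c] by auto
  thus "\<forall>x\<in>X. f x = -1" by blast
next
  assume "\<forall>x\<in>X. f x = -1"
  hence "{x\<in>X. f x = -1} = X" by auto
  thus "cm X = card X" by simp
qed

lemma sum_all1_iff: "X \<subseteq> {1..n} \<Longrightarrow> sum f X = int (card X) \<longleftrightarrow> (\<forall>x\<in>X. f x = 1)"
proof -
  assume X: "X \<subseteq> {1..n}"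
  have fin: "finite X" using X finite_subset by blast
  have "sum f X = int (card X) \<longleftrightarrow> cm X = 0" using sum_pm[OF X] by simp
  also have "\<dots> \<longleftrightarrow> {x\<in>X. f x = -1} = {}" using fin by simp
  also have "\<dots> \<longleftrightarrow> (\<forall>x\<in>X. f x = 1)" using X pm by auto
  finally show ?thesis .
qed

lemma Nmb:
  assumes StrR: "\<forall>i\<in>{1..m+1}. cm (RR i) = L" and StrT: "\<forall>i\<in>{1..m}. \<forall>x\<in>TT i. f x = 1"
  shows "N n = (m+1)*L"
proof -
  have TT0: "cm (TT i) = 0" if "i \<in> {1..m}" for i
  proof -
    have "{x\<in>TT i. f x = -1} = {}" using StrT that by fastforce
    thus ?thesis by (simp only: card.empty)
  qed
  have step: "j \<le> m \<Longrightarrow> N (j*b) = j*L" for j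
  proof (induction j)
    case 0 thus ?case by (simp add: N_def)
  next
    case (Suc j)
    have "RR (j+1) = {j*b<..j*b+r}" unfolding RR_def by simp
    hence "cm (RR (j+1)) = N (j*b + r) - N (j*b)" using cm_N[of "j*b" "j*b+r"] by simp
    moreover have "N (j*b) \<le> N (j*b + r)" by (rule N_mono) simp
    moreover have "cm (RR (j+1)) = L" using StrR Suc.prems by simp
    ultimately have a: "N (j*b + r) = j*L + L" using Suc by simp
    have "TT (j+1) = {j*b+r<..(j+1)*b}" unfolding TT_def by simp
    hence "cm (TT (j+1)) = N ((j+1)*b) - N (j*b + r)" using cm_N[of "j*b+r" "(j+1)*b"] r_lt_b by simp
    moreover have "N (j*b + r) \<le> N ((j+1)*b)" using r_lt_b by (intro N_mono) simp
    moreover have "cm (TT (j+1)) = 0" using TT0 Suc.prems by simp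
    ultimately show ?case using a by simp
  qed
  have "RR (m+1) = {m*b<..m*b+r}" unfolding RR_def by simp
  hence "cm (RR (m+1)) = N (m*b + r) - N (m*b)" using cm_N[of "m*b" "m*b+r"] by simp
  moreover have "N (m*b) \<le> N (m*b + r)" by (rule N_mono) simp
  moreover have "cm (RR (m+1)) = L" using StrR by simp
  ultimately show ?thesis using step[of m] nm by (simp add: algebra_simps)
qed

lemma n_eq: "n = (d+1)*((m+1)*L)"
proof -
  have "m*b + r = (d+1)*((m+1)*L)" using bL rL Lm KL by (simp add: algebra_simps)
  thus ?thesis using nm by simp
qed

lemma calT_eq:
  assumes StrR: "\<forall>i\<in>{1..m+1}. cm (RR i) = L" and StrT: "\<forall>i\<in>{1..m}. \<forall>x\<in>TT i. f x = 1"
    and s_1: "s = 1" and i: "i \<in> {1..m}"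
  shows "calT d k s f i = CT i"
  unfolding calT_def Rset Tset
proof (rule Greatest_equality)
  have im: "i \<in> {1..m+1}" "i+1 \<in> {1..m+1}" using i by auto
  note xp = xR_props[OF StrR StrT s_1 im(1)]
  note yp = yR_props[OF StrR StrT s_1 i]
  note ct = CT_card[OF StrR StrT s_1 i]
  have CTsub: "CT i \<subseteq> RR i \<union> TT i \<union> RR (i + 1)"
  proof
    fix z assume z: "z \<in> CT i"
    have "xR i < z" "z < yR i" using z unfolding CT_def by auto
    moreover have "(i-1)*b < xR i" using xp(1) unfolding RR_def by auto
    moreover have "yR i \<le> i*b + r" using yp(1) unfolding RR_def by auto
    ultimately show "z \<in> RR i \<union> TT i \<union> RR (i + 1)" unfolding RR_def TT_def by auto
  qed
  have CT1: "\<forall>z\<in>CT i. f z = 1"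
  proof
    fix z assume z: "z \<in> CT i"
    hence zz: "xR i < z" "z < yR i" unfolding CT_def by auto
    from z CTsub have "z \<in> RR i \<or> z \<in> TT i \<or> z \<in> RR (i+1)" by auto
    thus "f z = 1" using xp(3) yp(3) StrT i zz by auto
  qed
  have TCT: "TT i \<subseteq> CT i" unfolding TT_def CT_def using ct by auto
  have CTn: "CT i \<subseteq> {1..n}" using CTsub RR_sub[OF im(1)] RR_sub[OF im(2)] TT_sub[OF i] by blast
  show "is_block (CT i) \<and> TT i \<subseteq> CT i \<and> CT i \<subseteq> RR i \<union> TT i \<union> RR (i + 1) \<and> sum f (CT i) = int (card (CT i))"
    using TCT CTsub CT1 sum_all1_iff[OF CTn] unfolding CT_def is_block_def by auto
  fix B assume B: "is_block B \<and> TT i \<subseteq> B \<and> B \<subseteq> RR i \<union> TT i \<union> RR (i + 1) \<and> sum f B = int (card B)"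
  have Bn: "B \<subseteq> {1..n}" using B RR_sub[OF im(1)] RR_sub[OF im(2)] TT_sub[OF i] by blast
  have B1: "\<forall>z\<in>B. f z = 1" using B sum_all1_iff[OF Bn] by blast
  have tT: "i*b \<in> TT i" unfolding TT_def using r_lt_b ib_eq[of i] i by auto
  hence tB: "i*b \<in> B" using B by auto
  have blk: "\<forall>x y z. x \<in> B \<longrightarrow> z \<in> B \<longrightarrow> x \<le> y \<longrightarrow> y \<le> z \<longrightarrow> y \<in> B" using B unfolding is_block_def by blast
  show "B \<le> CT i"
  proof
    fix z assume z: "z \<in> B"
    have "xR i < z"
    proof (rule ccontr)
      assume "\<not> xR i < z"
      moreover have "xR i \<le> i*b" using ct by linarith
      ultimately have "xR i \<in> B" using blk z tB by (meson not_less)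
      thus False using B1 xp(2) by auto
    qed
    moreover have "z < yR i"
    proof (rule ccontr)
      assume "\<not> z < yR i"
      moreover have "i*b \<le> yR i" using ct by linarith
      ultimately have "yR i \<in> B" using blk z tB by (meson not_less)
      thus False using B1 yp(2) by auto
    qed
    ultimately show "z \<in> CT i" unfolding CT_def by simp
  qed
qed

end


context fset2 begin

definition Str :: bool where
  "Str \<longleftrightarrow> (\<forall>i\<in>{1..m+1}. cm (RR i) = L) \<and> (\<forall>i\<in>{1..m}. \<forall>x\<in>TT i. f x = 1) \<and>
     (s = 1 \<longrightarrow> (\<forall>i\<in>{1..m}. BC i))"

lemma RR_minus_iff: "i \<in> {1..m+1} \<Longrightarrow> s = 0 \<Longrightarrow> (\<forall>x\<in>RR i. f x = -1) \<longleftrightarrow> cm (RR i) = L"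
proof -
  assume "s = 0"
  hence "card (RR i) = L" using card_RR rL by simp
  moreover have "finite (RR i)" unfolding RR_def by simp
  ultimately show ?thesis using all_minus_iff[of "RR i"] by auto
qed

lemma TT_one_iff: "i \<in> {1..m} \<Longrightarrow> sum f (TT i) = int (card (TT i)) \<longleftrightarrow> (\<forall>x\<in>TT i. f x = 1)"
  using sum_all1_iff[OF TT_sub] by simp

lemma RR_sum_iff: "i \<in> {1..m+1} \<Longrightarrow> s = 1 \<Longrightarrow> sum f (RR i) = int d - int (k div 2) + 1 \<longleftrightarrow> cm (RR i) = L"
proof -
  assume i: "i \<in> {1..m+1}" and s1: "s = 1"
  have "sum f (RR i) = int r - 2 * int (cm (RR i))" using sum_pm[OF RR_sub[OF i]] card_RR by simp
  moreover have "k div 2 = L + 1" using kL by simp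
  ultimately show ?thesis using rL s1 by auto
qed

lemma Fplus_iff: "F_plus d k s f \<longleftrightarrow> Str"
proof (cases "s = 0")
  case True
  have "F_plus d k s f \<longleftrightarrow> F1 d k s f" unfolding F_plus_def using True by simp
  also have "\<dots> \<longleftrightarrow> (\<forall>i\<in>{1..m+1}. \<forall>x\<in>RR i. f x = -1) \<and> (\<forall>i\<in>{1..m}. \<forall>x\<in>TT i. f x = 1)"
    unfolding F1_def mdef Rset Tset ..
  also have "\<dots> \<longleftrightarrow> Str" unfolding Str_def using RR_minus_iff True by auto
  finally show ?thesis .
next
  case False
  hence s_1: "s = 1" using s1 by simp
  have kd: "int (card (TT i)) = int (k div 2) * int d" if "i \<in> {1..m}" for i
  proof -
    have "card (TT i) = d*(K-1)" using card_TT[of i] that s_1 by simp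
    moreover have "k div 2 = K - 1" using kL KL by simp
    ultimately show ?thesis by simp
  qed
  have kk: "k div 2 - 1 = L" using kL by simp
  have "F_plus d k s f \<longleftrightarrow> F2 d k s f" unfolding F_plus_def using s_1 by simp
  also have "\<dots> \<longleftrightarrow> Str"
  proof
    assume F: "F2 d k s f"
    have StrT: "\<forall>i\<in>{1..m}. \<forall>x\<in>TT i. f x = 1" using F TT_one_iff unfolding F2_def mdef Tset by auto
    have StrR: "\<forall>i\<in>{1..m+1}. cm (RR i) = L" using F RR_sum_iff[OF _ s_1] unfolding F2_def mdef Rset by auto
    have "\<forall>i\<in>{1..m}. BC i"
    proof
      fix i assume i: "i \<in> {1..m}"
      have "(\<not> is_block (R_one d k s f i) \<longrightarrow> card (calT d k s f i - T_set d k s i) \<ge> d) \<and>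
        (is_block (R_one d k s f i) \<and> R_set d k s i \<inter> calT d k s f i = {} \<longrightarrow>
           is_block (R_one d k s f (i + 1)) \<and>
           card {x. (\<forall>y \<in> R_one d k s f i. \<forall>z \<in> R_one d k s f (i + 1). y < x \<and> x < z)
                    \<and> f x = -1} \<le> k div 2 - 1)" using F i unfolding F2_def mdef by blast
      thus "BC i" unfolding BC_def Bt_def Ronedef Rset Tset calT_eq[OF StrR StrT s_1 i] kk .
    qed
    thus "Str" unfolding Str_def using StrT StrR by simp
  next
    assume S: "Str"
    have StrT: "\<forall>i\<in>{1..m}. \<forall>x\<in>TT i. f x = 1" and StrR: "\<forall>i\<in>{1..m+1}. cm (RR i) = L"
      and BCs: "\<forall>i\<in>{1..m}. BC i" using S s_1 unfolding Str_def by auto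
    have p1: "\<forall>i\<in>{1..m}. sum f (T_set d k s i) = int (card (T_set d k s i)) \<and> int (card (T_set d k s i)) = int (k div 2) * int d"
      unfolding Tset using StrT TT_one_iff kd by auto
    have p2: "\<forall>i\<in>{1..m+1}. sum f (R_set d k s i) = int d - int (k div 2) + 1"
      unfolding Rset using StrR RR_sum_iff[OF _ s_1] by auto
    have p3: "\<forall>i \<in> {1..m}.
        (\<not> is_block (R_one d k s f i) \<longrightarrow> card (calT d k s f i - T_set d k s i) \<ge> d) \<and>
        (is_block (R_one d k s f i) \<and> R_set d k s i \<inter> calT d k s f i = {} \<longrightarrow>
           is_block (R_one d k s f (i + 1)) \<and>
           card {x. (\<forall>y \<in> R_one d k s f i. \<forall>z \<in> R_one d k s f (i + 1). y < x \<and> x < z)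
                    \<and> f x = -1} \<le> k div 2 - 1)"
    proof
      fix i assume i: "i \<in> {1..m}"
      show "(\<not> is_block (R_one d k s f i) \<longrightarrow> card (calT d k s f i - T_set d k s i) \<ge> d) \<and>
        (is_block (R_one d k s f i) \<and> R_set d k s i \<inter> calT d k s f i = {} \<longrightarrow>
           is_block (R_one d k s f (i + 1)) \<and>
           card {x. (\<forall>y \<in> R_one d k s f i. \<forall>z \<in> R_one d k s f (i + 1). y < x \<and> x < z)
                    \<and> f x = -1} \<le> k div 2 - 1)"
        unfolding Ronedef Rset Tset calT_eq[OF StrR StrT s_1 i] kk using BCs i unfolding BC_def Bt_def by blast
    qed
    show "F2 d k s f" unfolding F2_def mdef using p1 p2 p3 by blast
  qed
  finally show ?thesis .
qed

lemma sum_all: "sum f {1..n} = int n - 2 * int (N n)"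
  using sum_pm[of "{1..n}"] unfolding N_def by simp

lemma coreA:
  assumes noZ: "\<forall>A. dk_block d k n A \<longrightarrow> sum f A \<noteq> 0"
    and eq: "(int d + 1) * sum f {1..n} = (int d - 1) * int n"
  shows Str
proof -
  have "(int d + 1) * (int n - 2 * int (N n)) = (int d - 1) * int n" using eq sum_all by simp
  hence "int n = (int d + 1) * int (N n)" by (simp add: algebra_simps)
  hence nN: "n = (d+1) * N n" by (metis of_nat_1 of_nat_add of_nat_eq_iff of_nat_mult)
  have noZ': "\<forall>A. good d k n A \<longrightarrow> sum f A \<noteq> 0" using noZ good_dk_block by blast
  have allpos: "\<And>A. good d k n A \<Longrightarrow> cm A \<le> L" using all_pos[OF noZ' nN] by blast
  have "(d+1) * N n = (d+1) * ((m+1)*L)" using nN n_eq by simp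
  moreover have "(d+1)*N n = (d+1)*((m+1)*L) \<longleftrightarrow> N n = (m+1)*L" by (rule nat_mult_eq_cancel1) simp
  ultimately have NM: "N n = (m+1)*L" by blast
  note sa = structA[OF allpos NM]
  have StrT: "\<forall>i\<in>{1..m}. \<forall>x\<in>TT i. f x = 1"
  proof (intro ballI)
    fix i x assume i: "i \<in> {1..m}" and x: "x \<in> TT i"
    have "cm (TT i) = 0" using sa(2) i by simp
    moreover have "finite (TT i)" unfolding TT_def by simp
    ultimately have "f x \<noteq> -1" using x by auto
    thus "f x = 1" using pm TT_sub[OF i] x by auto
  qed
  have "s = 1 \<longrightarrow> (\<forall>i\<in>{1..m}. BC i)" using BC_A[OF sa(1) StrT _ allpos] by blast
  thus ?thesis unfolding Str_def using sa(1) StrT by simp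
qed

lemma coreB:
  assumes S: Str
  shows "(\<forall>A. dk_block d k n A \<longrightarrow> sum f A \<noteq> 0) \<and> (int d + 1) * sum f {1..n} = (int d - 1) * int n"
proof -
  have StrR: "\<forall>i\<in>{1..m+1}. cm (RR i) = L" and StrT: "\<forall>i\<in>{1..m}. \<forall>x\<in>TT i. f x = 1"
    and BCs: "s = 1 \<longrightarrow> (\<forall>i\<in>{1..m}. BC i)" using S unfolding Str_def by auto
  have NM: "N n = (m+1)*L" by (rule Nmb[OF StrR StrT])
  have "(int d + 1) * sum f {1..n} = (int d + 1) * (int ((d+1)*((m+1)*L)) - 2 * int ((m+1)*L))"
    using sum_all NM n_eq by simp
  also have "\<dots> = (int d - 1) * int ((d+1)*((m+1)*L))" by (simp add: algebra_simps)
  finally have e: "(int d + 1) * sum f {1..n} = (int d - 1) * int n" using n_eq by simp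
  have "sum f A \<noteq> 0" if A: "dk_block d k n A" for A
  proof -
    have gA: "good d k n A" using dk_block_good[OF A] .
    have "cm A \<le> L"
    proof (cases "s = 0")
      case True show ?thesis by (rule noBlock0[OF StrR StrT True gA])
    next
      case False
      hence s_1: "s = 1" using s1 by simp
      show ?thesis using noBlock1[OF StrR StrT s_1 _ gA] BCs s_1 by blast
    qed
    thus ?thesis using good_zero[OF gA] by simp
  qed
  thus ?thesis using e by blast
qed

end


lemma poly_id:
  fixes q s d :: int
  shows "(d + 1) * ((4*q + 2*s + 2)^2 - 2 * s * (4*q + 2*s + 2) + 4 * s - 4)
     = 8 * (q * ((2*q + s) + d * ((2*q+s) + 2)) + ((2*q + s) + s * d))"
  by algebra

lemma param_setup:
  fixes k d n s :: nat
  assumes "6 \<le> k" and "even k" and "2 \<le> d"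
    and "s \<in> {0, 1}" and "s mod 2 = ((k - 2) div 2) mod 2"
    and "8 * int n = (int d + 1) * (int k ^ 2 - 2 * int s * int k + 4 * int s - 4)"
  shows "setting d k s (pm_m k s) (k div 2 - 1) (k div 2 + 1) (pm_b d k) (pm_r d k s) n"
proof -
  define L where "L = k div 2 - 1"
  have kL: "k = 2*L + 2" using assms(1,2) unfolding L_def by auto
  have s1: "s \<le> 1" using assms(4) by auto
  have "(k - 2) div 2 = L" using kL by simp
  hence "L mod 2 = s mod 2" using assms(5) by simp
  hence Ls: "L mod 2 = s" using s1 by auto
  define q where "q = L div 2"
  have q: "L = 2*q + s" using div_mult_mod_eq[of L 2] Ls unfolding q_def by simp
  have m: "pm_m k s = q" unfolding pm_m_def using kL q by simp
  have L2: "L \<ge> 2" using assms(1) kL by simp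
  have m1: "q \<ge> 1" using L2 q s1 by simp
  have b: "pm_b d k = L + d*(L+2)" unfolding pm_b_def using kL assms(3) by (simp add: algebra_simps)
  have r: "pm_r d k s = L + s*d" unfolding pm_r_def using kL by simp
  have ki: "int k = 4*int q + 2*int s + 2" using kL q by simp
  have "8 * int n = 8 * (int q * ((2*int q + int s) + int d * ((2*int q + int s) + 2)) + ((2*int q + int s) + int s * int d))"
    using assms(6) poly_id[where q="int q" and s="int s" and d="int d"] unfolding ki by simp
  also have "\<dots> = 8 * int (q*(L + d*(L+2)) + (L + s*d))" using q by (simp add: algebra_simps)
  finally have "8 * int n = 8 * int (q*(L + d*(L+2)) + (L + s*d))" .
  moreover obtain X where X: "X = q*(L + d*(L+2)) + (L + s*d)" by blast
  ultimately have "8 * int n = 8 * int X" by simp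
  hence "n = X" by simp
  hence n: "n = q*(L + d*(L+2)) + (L + s*d)" using X by simp
  show ?thesis unfolding setting_def
    using assms(3) m1 s1 kL q n m b r unfolding L_def[symmetric] by simp
qed

theorem theorem3p7:
  fixes k d n s :: nat
  assumes "0 < k" and "0 < d" and "0 < n"
    and "6 \<le> k" and "even k" and "2 \<le> d"
    and "s \<in> {0, 1}" and "s mod 2 = ((k - 2) div 2) mod 2"
    and "8 * int n = (int d + 1) * (int k ^ 2 - 2 * int s * int k + 4 * int s - 4)"
  shows "\<forall>f :: nat \<Rightarrow> int. (\<forall>x \<in> {1..n}. f x \<in> {-1, 1}) \<longrightarrow>
     (((int d + 1) * \<bar>sum f {1..n}\<bar> = (int d - 1) * int n \<and>
      \<not> (\<exists>A. dk_block d k n A \<and> sum f A = 0))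
     \<longleftrightarrow> F_fam d k s f)"
proof (intro allI impI)
  fix f :: "nat \<Rightarrow> int"
  assume fpm: "\<forall>x \<in> {1..n}. f x \<in> {-1, 1}"
  let ?g = "\<lambda>x. - f x"
  have S: "setting d k s (pm_m k s) (k div 2 - 1) (k div 2 + 1) (pm_b d k) (pm_r d k s) n"
    using param_setup[OF assms(4-9)] .
  have Ff: "fset2 d k s (pm_m k s) (k div 2 - 1) (k div 2 + 1) (pm_b d k) (pm_r d k s) n f"
    unfolding fset2_def fset2_axioms_def fsetting_def fsetting_axioms_def using S fpm by auto
  have Fg: "fset2 d k s (pm_m k s) (k div 2 - 1) (k div 2 + 1) (pm_b d k) (pm_r d k s) n ?g"
    unfolding fset2_def fset2_axioms_def fsetting_def fsetting_axioms_def using S fpm by auto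
  note iffF = fset2.Fplus_iff[OF Ff] and iffG = fset2.Fplus_iff[OF Fg]
  note AF = fset2.coreA[OF Ff] and AG = fset2.coreA[OF Fg]
  note BF = fset2.coreB[OF Ff] and BG = fset2.coreB[OF Fg]
  have sg: "sum ?g X = - sum f X" for X by (simp add: sum_negf)
  have dpos: "0 < int d + 1" by simp
  show "((int d + 1) * \<bar>sum f {1..n}\<bar> = (int d - 1) * int n \<and>
      \<not> (\<exists>A. dk_block d k n A \<and> sum f A = 0)) \<longleftrightarrow> F_fam d k s f"
  proof
    assume h: "(int d + 1) * \<bar>sum f {1..n}\<bar> = (int d - 1) * int n \<and> \<not> (\<exists>A. dk_block d k n A \<and> sum f A = 0)"
    have noZ: "\<forall>A. dk_block d k n A \<longrightarrow> sum f A \<noteq> 0" using h by blast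
    show "F_fam d k s f"
    proof (cases "sum f {1..n} \<ge> 0")
      case True
      hence "(int d + 1) * sum f {1..n} = (int d - 1) * int n" using h by simp
      hence "F_plus d k s f" using AF noZ iffF by blast
      thus ?thesis unfolding F_fam_def by simp
    next
      case False
      hence "(int d + 1) * sum ?g {1..n} = (int d - 1) * int n" using h sg by simp
      moreover have "\<forall>A. dk_block d k n A \<longrightarrow> sum ?g A \<noteq> 0" using noZ sg by simp
      ultimately have "F_plus d k s ?g" using AG iffG by blast
      thus ?thesis unfolding F_fam_def F_minus_def by simp
    qed
  next
    assume "F_fam d k s f"
    hence "F_plus d k s f \<or> F_plus d k s ?g" unfolding F_fam_def F_minus_def by simp
    thus "(int d + 1) * \<bar>sum f {1..n}\<bar> = (int d - 1) * int n \<and> \<not> (\<exists>A. dk_block d k n A \<and> sum f A = 0)"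
    proof
      assume "F_plus d k s f"
      hence b: "(\<forall>A. dk_block d k n A \<longrightarrow> sum f A \<noteq> 0) \<and> (int d + 1) * sum f {1..n} = (int d - 1) * int n"
        using BF iffF by blast
      have "(int d - 1) * int n \<ge> 0" using assms(6) by simp
      hence "sum f {1..n} \<ge> 0" using b dpos by (metis zero_le_mult_iff not_le)
      thus ?thesis using b by auto
    next
      assume "F_plus d k s ?g"
      hence b: "(\<forall>A. dk_block d k n A \<longrightarrow> sum ?g A \<noteq> 0) \<and> (int d + 1) * sum ?g {1..n} = (int d - 1) * int n"
        using BG iffG by blast
      have "(int d - 1) * int n \<ge> 0" using assms(6) by simp
      hence "sum ?g {1..n} \<ge> 0" using b dpos by (metis zero_le_mult_iff not_le)
      thus ?thesis using b sg by auto
    qed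
  qed
qed


end
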